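(* Let $V=\{v_1,\dots,v_k\}\subset\mathcal{V}_{\mathbb{T}}$, $\kappa\in\{-1,+1\}$, $E=\{e_1,\dots,e_\ell\}\subset\mathcal{E}_{\mathbb{T}}$ (possibly empty), and $s_1,\dots,s_\ell,g_1,\dots,g_\ell\in\{0,1\}$ with $g_i\ge s_i$ for all $i$. Let $I=\bigcap_{i=1}^k\{\sigma(v_i)=\kappa\}$, $A_s=\bigcap_{j=1}^\ell\{\eta(e_j)=s_j\}$, $A_g=\bigcap_{j=1}^\ell\{\eta(e_j)=g_j\}$ (with $A_s=A_g$ the whole space if $E=\emptyset$). Then for every $e\in\mathcal{E}_{\mathbb{T}}\setminus E$, $$\mathbb{P}_{\beta,r}(\eta(e)=1\mid A_g,I)\ge \mathbb{P}_{\beta,r}(\eta(e)=1\mid A_s).$$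
   Context: $\mathbb{T}$ is the triangular lattice with vertex set $\mathcal{V}_{\mathbb{T}}$ and edge set $\mathcal{E}_{\mathbb{T}}$; $\beta_c$ is the critical inverse temperature of the zero-field Ising model on $\mathbb{T}$. Throughout $\beta<\beta_c$, $p=1-e^{-\beta}$, $r\in[0,1]$, and $\nu_{p,2}$ is the (unique) Fortuin–Kasteleyn random-cluster measure on $\{0,1\}^{\mathcal{E}_{\mathbb{T}}}$ with parameters $p$ and $q=2$. $\mathbb{P}_{\beta,r}$ is the joint law of $(\eta,\sigma)\in\{0,1\}^{\mathcal{E}_{\mathbb{T}}}\times\{-1,+1\}^{\mathcal{V}_{\mathbb{T}}}$ where $\eta\sim\nu_{p,2}$ and, given $\eta$, each FK cluster (connected component of open edges, $\eta(e)=1$) independently receives spin $+1$ with probability $r$ and $-1$ with probability $1-r$, all its vertices getting that spin. *)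

theory Defs
  imports "HOL-Probability.Probability" "HOL-Library.Countable"
begin

type_synonym vtx = "int \<times> int"
type_synonym edg = "vtx set"

text \<open>Triangular lattice embedded in Z^2: neighbours differ by (1,0),(0,1),(1,1) or their negatives.\<close>
definition tadj :: "vtx \<Rightarrow> vtx \<Rightarrow> bool" where
  "tadj u v \<longleftrightarrow> (fst v - fst u, snd v - snd u) \<in> {(1,0),(-1,0),(0,1),(0,-1),(1,1),(-1,-1)}"

definition TE :: "edg set" where
  "TE = {{u, v} | u v. tadj u v}"

definition box :: "nat \<Rightarrow> vtx set" where
  "box n = {-int n..int n} \<times> {-int n..int n}"

definition box_edges :: "nat \<Rightarrow> edg set" where
  "box_edges n = {e \<in> TE. e \<subseteq> box n}"

definition open_rel :: "edg set \<Rightarrow> (vtx \<times> vtx) set" where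
  "open_rel Op = {(a, b). {a, b} \<in> Op}"

definition num_clusters :: "nat \<Rightarrow> edg set \<Rightarrow> nat" where
  "num_clusters n Op = card (box n // ((open_rel Op)\<^sup>*))"

definition fk_weight :: "real \<Rightarrow> real \<Rightarrow> nat \<Rightarrow> edg set \<Rightarrow> real" where
  "fk_weight p q n Op = p ^ card Op * (1 - p) ^ card (box_edges n - Op) * q ^ num_clusters n Op"

definition cfg :: "edg set \<Rightarrow> (edg \<Rightarrow> bool)" where
  "cfg Op = (\<lambda>e\<in>TE. e \<in> Op)"

text \<open>Free-boundary random-cluster measure on the box, applied to an event of full configurations
  (edges outside the box are closed).\<close>
definition fk_free :: "real \<Rightarrow> real \<Rightarrow> nat \<Rightarrow> (edg \<Rightarrow> bool) set \<Rightarrow> real" where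
  "fk_free p q n A =
     (\<Sum>Op\<in>Pow (box_edges n). if cfg Op \<in> A then fk_weight p q n Op else 0)
     / (\<Sum>Op\<in>Pow (box_edges n). fk_weight p q n Op)"

definition Omega_E :: "(edg \<Rightarrow> bool) measure" where
  "Omega_E = (\<Pi>\<^sub>M e\<in>TE. count_space (UNIV :: bool set))"

text \<open>nu is the infinite-volume (free) random-cluster measure: probabilities of all cylinder events
  are the limits of the finite-volume free measures.\<close>
definition FK_free_limit :: "real \<Rightarrow> real \<Rightarrow> (edg \<Rightarrow> bool) measure \<Rightarrow> bool" where
  "FK_free_limit p q \<nu> \<longleftrightarrow>
     prob_space \<nu> \<and> sets \<nu> = sets Omega_E \<and>
     (\<forall>A F. finite F \<and> F \<subseteq> TE \<and> A \<in> sets Omega_E \<and>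
        (\<forall>\<eta>\<in>space Omega_E. \<forall>\<eta>'\<in>space Omega_E. (\<forall>e\<in>F. \<eta> e = \<eta>' e) \<longrightarrow> (\<eta> \<in> A \<longleftrightarrow> \<eta>' \<in> A))
        \<longrightarrow> (\<lambda>n. fk_free p q n A) \<longlonglongrightarrow> measure \<nu> A)"

text \<open>Plus-boundary Ising model on box n with weight exp((beta/2) * sum over edges of sigma_u sigma_v),
  which is the Ising model coupled to FK with p = 1 - exp(-beta).\<close>
definition ext_plus :: "nat \<Rightarrow> (vtx \<Rightarrow> int) \<Rightarrow> vtx \<Rightarrow> int" where
  "ext_plus n \<sigma> x = (if x \<in> box n then \<sigma> x else 1)"

definition ising_weight :: "real \<Rightarrow> nat \<Rightarrow> (vtx \<Rightarrow> int) \<Rightarrow> real" where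
  "ising_weight \<beta> n \<sigma> =
     exp (\<beta> / 2 * (\<Sum>e\<in>{e \<in> TE. e \<inter> box n \<noteq> {}}. real_of_int (\<Prod>x\<in>e. ext_plus n \<sigma> x)))"

definition ising_plus_mag :: "real \<Rightarrow> nat \<Rightarrow> real" where
  "ising_plus_mag \<beta> n =
     (\<Sum>\<sigma>\<in>box n \<rightarrow>\<^sub>E {-1, 1}. real_of_int (\<sigma> (0, 0)) * ising_weight \<beta> n \<sigma>)
     / (\<Sum>\<sigma>\<in>box n \<rightarrow>\<^sub>E {-1, 1}. ising_weight \<beta> n \<sigma>)"

definition spont_mag :: "real \<Rightarrow> real" where
  "spont_mag \<beta> = lim (ising_plus_mag \<beta>)"

definition beta_c :: real where
  "beta_c = Inf {\<beta>. 0 \<le> \<beta> \<and> spont_mag \<beta> > 0}"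

definition connected :: "(edg \<Rightarrow> bool) \<Rightarrow> vtx \<Rightarrow> vtx \<Rightarrow> bool" where
  "connected \<eta> u v \<longleftrightarrow> (u, v) \<in> {(a, b). {a, b} \<in> TE \<and> \<eta> {a, b}}\<^sup>*"

definition rep :: "(edg \<Rightarrow> bool) \<Rightarrow> vtx \<Rightarrow> vtx" where
  "rep \<eta> v = arg_min (to_nat :: vtx \<Rightarrow> nat) (connected \<eta> v)"

definition spin_pmf :: "real \<Rightarrow> int pmf" where
  "spin_pmf r = map_pmf (\<lambda>b. if b then 1 else -1) (bernoulli_pmf r)"

text \<open>Each cluster gets the i.i.d. spin tau of its representative: P_{beta,r}.\<close>
definition P_joint :: "(edg \<Rightarrow> bool) measure \<Rightarrow> real \<Rightarrow> ((edg \<Rightarrow> bool) \<times> (vtx \<Rightarrow> int)) measure" where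
  "P_joint \<nu> r =
     distr (\<nu> \<Otimes>\<^sub>M (\<Pi>\<^sub>M v\<in>(UNIV :: vtx set). measure_pmf (spin_pmf r)))
           (Omega_E \<Otimes>\<^sub>M (\<Pi>\<^sub>M v\<in>(UNIV :: vtx set). count_space (UNIV :: int set)))
           (\<lambda>(\<eta>, \<tau>). (\<eta>, \<lambda>v. \<tau> (rep \<eta> v)))"

end

theory Submission
  imports Defs
begin

lemma four_base:
  fixes a0 a1 b0 b1 c0 c1 d0 d1 :: real
  assumes nn: "0\<le>a0" "0\<le>a1" "0\<le>b0" "0\<le>b1" "0\<le>c0" "0\<le>c1" "0\<le>d0" "0\<le>d1"
    and h00: "a0*b0 \<le> c0*d0" and h01: "a0*b1 \<le> c1*d0" and h10: "a1*b0 \<le> c1*d0"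
    and h11: "a1*b1 \<le> c1*d1"
  shows "(a0+a1)*(b0+b1) \<le> (c0+c1)*(d0+d1)"
proof (cases "c1*d0 = 0")
  case True
  then have "a0*b1 = 0" "a1*b0 = 0" using h01 h10 nn
    by (metis antisym mult_nonneg_nonneg)+
  then have "(a0+a1)*(b0+b1) = a0*b0 + a1*b1" by (simp add: algebra_simps; auto)
  also have "\<dots> \<le> c0*d0 + c1*d1" using h00 h11 by simp
  also have "\<dots> \<le> (c0+c1)*(d0+d1)" using nn by (simp add: algebra_simps)
  finally show ?thesis .
next
  case False
  define X where "X = c1*d0"
  have Xp: "X > 0" using False nn unfolding X_def by (simp add: less_le)
  have e1: "(c0+c1)*(d0+d1) * X = (c0*d0 + X) * (X + c1*d1)"
    unfolding X_def by (simp add: algebra_simps)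
  have e2: "(a0*b0 + X) * (X + a1*b1) \<le> (c0*d0 + X) * (X + c1*d1)"
    using h00 h11 nn Xp by (intro mult_mono) (auto intro: add_nonneg_nonneg)
  have e3: "(a0*b0 + X) * (X + a1*b1) - X * ((a0+a1)*(b0+b1)) = (X - a0*b1)*(X - a1*b0)"
    by (simp add: algebra_simps)
  have e4: "(X - a0*b1)*(X - a1*b0) \<ge> 0" using h01 h10 unfolding X_def by simp
  have "X * ((a0+a1)*(b0+b1)) \<le> X * ((c0+c1)*(d0+d1))"
    using e1 e2 e3 e4 by (simp add: algebra_simps)
  then show ?thesis using Xp by simp
qed

lemma sum_Pow_insert:
  assumes "finite S" "x \<notin> S"
  shows "(\<Sum>A\<in>Pow (insert x S). f A) = (\<Sum>A\<in>Pow S. f A + f (insert x A))"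
proof -
  have inj: "inj_on (insert x) (Pow S)" using assms(2) by (auto simp: inj_on_def)
  have d: "Pow S \<inter> insert x ` Pow S = {}" using assms(2) by auto
  have "(\<Sum>A\<in>Pow (insert x S). f A) = (\<Sum>A\<in>Pow S \<union> insert x ` Pow S. f A)"
    by (simp add: Pow_insert)
  also have "\<dots> = (\<Sum>A\<in>Pow S. f A) + (\<Sum>A\<in>insert x ` Pow S. f A)"
    using d assms(1) by (intro sum.union_disjoint) auto
  also have "(\<Sum>A\<in>insert x ` Pow S. f A) = (\<Sum>A\<in>Pow S. f (insert x A))"
    using inj by (simp add: sum.reindex)
  finally show ?thesis by (simp add: sum.distrib)
qed

lemma four_functions:
  fixes \<alpha> \<beta> \<gamma> \<delta> :: "'a set \<Rightarrow> real"
  assumes "finite S"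
    and "\<And>A. A \<subseteq> S \<Longrightarrow> 0 \<le> \<alpha> A" "\<And>A. A \<subseteq> S \<Longrightarrow> 0 \<le> \<beta> A"
    and "\<And>A. A \<subseteq> S \<Longrightarrow> 0 \<le> \<gamma> A" "\<And>A. A \<subseteq> S \<Longrightarrow> 0 \<le> \<delta> A"
    and "\<And>A B. A \<subseteq> S \<Longrightarrow> B \<subseteq> S \<Longrightarrow> \<alpha> A * \<beta> B \<le> \<gamma> (A \<union> B) * \<delta> (A \<inter> B)"
  shows "(\<Sum>A\<in>Pow S. \<alpha> A) * (\<Sum>A\<in>Pow S. \<beta> A) \<le> (\<Sum>A\<in>Pow S. \<gamma> A) * (\<Sum>A\<in>Pow S. \<delta> A)"
  using assms
proof (induction S arbitrary: \<alpha> \<beta> \<gamma> \<delta> rule: finite_induct)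
  case empty
  then show ?case by simp
next
  case (insert x S)
  define \<alpha>' where "\<alpha>' A = \<alpha> A + \<alpha> (insert x A)" for A
  define \<beta>' where "\<beta>' A = \<beta> A + \<beta> (insert x A)" for A
  define \<gamma>' where "\<gamma>' A = \<gamma> A + \<gamma> (insert x A)" for A
  define \<delta>' where "\<delta>' A = \<delta> A + \<delta> (insert x A)" for A
  have "(\<Sum>A\<in>Pow S. \<alpha>' A) * (\<Sum>A\<in>Pow S. \<beta>' A) \<le> (\<Sum>A\<in>Pow S. \<gamma>' A) * (\<Sum>A\<in>Pow S. \<delta>' A)"
  proof (rule insert.IH)
    fix A assume A: "A \<subseteq> S"
    then have A': "A \<subseteq> insert x S" "insert x A \<subseteq> insert x S" by auto
    show "0 \<le> \<alpha>' A" "0 \<le> \<beta>' A" "0 \<le> \<gamma>' A" "0 \<le> \<delta>' A"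
      unfolding \<alpha>'_def \<beta>'_def \<gamma>'_def \<delta>'_def using insert.prems A' by (auto intro: add_nonneg_nonneg)
  next
    fix A B assume A: "A \<subseteq> S" and B: "B \<subseteq> S"
    have xA: "x \<notin> A" and xB: "x \<notin> B" using A B insert.hyps by auto
    have s: "A \<subseteq> insert x S" "insert x A \<subseteq> insert x S" "B \<subseteq> insert x S" "insert x B \<subseteq> insert x S"
      using A B by auto
    have u1: "insert x A \<union> B = insert x (A \<union> B)" "A \<union> insert x B = insert x (A \<union> B)"
      "insert x A \<union> insert x B = insert x (A \<union> B)" by auto
    have i1: "insert x A \<inter> B = A \<inter> B" "A \<inter> insert x B = A \<inter> B"
      "insert x A \<inter> insert x B = insert x (A \<inter> B)" using xA xB by auto
    have h00: "\<alpha> A * \<beta> B \<le> \<gamma> (A \<union> B) * \<delta> (A \<inter> B)" using insert.prems(5)[OF s(1) s(3)] .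
    have h01: "\<alpha> A * \<beta> (insert x B) \<le> \<gamma> (insert x (A \<union> B)) * \<delta> (A \<inter> B)"
      using insert.prems(5)[OF s(1) s(4)] u1 i1 by simp
    have h10: "\<alpha> (insert x A) * \<beta> B \<le> \<gamma> (insert x (A \<union> B)) * \<delta> (A \<inter> B)"
      using insert.prems(5)[OF s(2) s(3)] u1 i1 by simp
    have h11: "\<alpha> (insert x A) * \<beta> (insert x B) \<le> \<gamma> (insert x (A \<union> B)) * \<delta> (insert x (A \<inter> B))"
      using insert.prems(5)[OF s(2) s(4)] u1 i1 by simp
    have AB: "A \<union> B \<subseteq> insert x S" "insert x (A \<union> B) \<subseteq> insert x S" "A \<inter> B \<subseteq> insert x S"
      "insert x (A \<inter> B) \<subseteq> insert x S" using A B by auto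
    show "\<alpha>' A * \<beta>' B \<le> \<gamma>' (A \<union> B) * \<delta>' (A \<inter> B)"
      unfolding \<alpha>'_def \<beta>'_def \<gamma>'_def \<delta>'_def
      by (rule four_base[OF insert.prems(1)[OF s(1)] insert.prems(1)[OF s(2)]
            insert.prems(2)[OF s(3)] insert.prems(2)[OF s(4)]
            insert.prems(3)[OF AB(1)] insert.prems(3)[OF AB(2)]
            insert.prems(4)[OF AB(3)] insert.prems(4)[OF AB(4)] h00 h01 h10 h11])
  qed
  then show ?case
    unfolding \<alpha>'_def \<beta>'_def \<gamma>'_def \<delta>'_def
    by (simp only: sum_Pow_insert[OF insert.hyps])
qed

lemma sym_open_rel: "sym (open_rel X)"
  unfolding open_rel_def sym_def by (auto simp: insert_commute)

lemma equiv_R: "equiv UNIV ((open_rel X)\<^sup>*)"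
  unfolding equiv_def
  by (auto simp: refl_rtrancl trans_rtrancl sym_rtrancl[OF sym_open_rel])

lemma R_sym: "(x,y) \<in> (open_rel X)\<^sup>* \<Longrightarrow> (y,x) \<in> (open_rel X)\<^sup>*"
  using sym_rtrancl[OF sym_open_rel] by (rule symD)

lemma open_rel_insert: "open_rel (insert {a,b} X) = open_rel X \<union> {(a,b),(b,a)}"
  unfolding open_rel_def by (auto simp: doubleton_eq_iff)

lemma open_rel_mono: "X \<subseteq> Y \<Longrightarrow> (open_rel X)\<^sup>* \<subseteq> (open_rel Y)\<^sup>*"
  unfolding open_rel_def by (intro rtrancl_mono) auto

lemma quotient_image: "B // R = (\<lambda>x. R``{x}) ` B"
  by (auto simp: quotient_def)

lemma R_insert_conn:
  assumes "(a,b) \<in> (open_rel X)\<^sup>*"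
  shows "(open_rel (insert {a,b} X))\<^sup>* = (open_rel X)\<^sup>*"
proof
  let ?R = "(open_rel X)\<^sup>*"
  have ba: "(b,a) \<in> ?R" using assms by (rule R_sym)
  have "open_rel (insert {a,b} X) \<subseteq> ?R" using assms ba by (auto simp: open_rel_insert)
  then show "(open_rel (insert {a,b} X))\<^sup>* \<subseteq> ?R"
    by (metis rtrancl_idemp rtrancl_subset_rtrancl)
  show "?R \<subseteq> (open_rel (insert {a,b} X))\<^sup>*" by (rule open_rel_mono) auto
qed

lemma R_insert_disc:
  fixes a b :: vtx and X :: "edg set"
  defines "R \<equiv> (open_rel X)\<^sup>*"
  defines "U \<equiv> R``{a} \<union> R``{b}"
  shows "(open_rel (insert {a,b} X))\<^sup>* = R \<union> U \<times> U"
proof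
  have eq: "equiv UNIV R" unfolding R_def by (rule equiv_R)
  have symR: "(x,y) \<in> R \<Longrightarrow> (y,x) \<in> R" for x y unfolding R_def by (rule R_sym)
  have trR: "(x,y) \<in> R \<Longrightarrow> (y,z) \<in> R \<Longrightarrow> (x,z) \<in> R" for x y z
    unfolding R_def by (rule rtrancl_trans)
  have reflR: "(x,x) \<in> R" for x unfolding R_def by simp
  show "(open_rel (insert {a,b} X))\<^sup>* \<subseteq> R \<union> U \<times> U"
  proof
    fix p assume "p \<in> (open_rel (insert {a,b} X))\<^sup>*"
    then obtain x z where p: "p = (x,z)" and xz: "(x,z) \<in> (open_rel (insert {a,b} X))\<^sup>*"
      by (cases p) auto
    from xz have "(x,z) \<in> R \<union> U \<times> U"
    proof (induction rule: rtrancl_induct)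
      case base then show ?case using reflR by auto
    next
      case (step y z)
      from step.hyps(2) have "(y,z) \<in> open_rel X \<or> (y,z) \<in> {(a,b),(b,a)}"
        by (auto simp: open_rel_insert)
      then show ?case
      proof
        assume yz: "(y,z) \<in> open_rel X"
        then have yzR: "(y,z) \<in> R" unfolding R_def by auto
        from step.IH show ?thesis
        proof
          assume "(x,y) \<in> R" then show ?thesis using trR yzR by blast
        next
          assume "(x,y) \<in> U \<times> U"
          then show ?thesis using yzR trR unfolding U_def by blast
        qed
      next
        assume yz: "(y,z) \<in> {(a,b),(b,a)}"
        then have "(y=a \<and> z=b) \<or> (y=b \<and> z=a)" by blast
        then have zU: "z \<in> U" "y \<in> U" unfolding U_def using reflR[of a] reflR[of b] by blast+
        from step.IH show ?thesis
        proof
          assume xy: "(x,y) \<in> R"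
          have "x \<in> U" using zU(2) xy symR trR unfolding U_def by blast
          then show ?thesis using zU by auto
        next
          assume "(x,y) \<in> U \<times> U" then show ?thesis using zU by auto
        qed
      qed
    qed
    then show "p \<in> R \<union> U \<times> U" using p by simp
  qed
  show "R \<union> U \<times> U \<subseteq> (open_rel (insert {a,b} X))\<^sup>*"
  proof -
    let ?R' = "(open_rel (insert {a,b} X))\<^sup>*"
    have RR: "R \<subseteq> ?R'" unfolding R_def by (rule open_rel_mono) auto
    have ab: "(a,b) \<in> ?R'" "(b,a) \<in> ?R'" by (auto simp: open_rel_insert)
    have tr: "(x,y) \<in> ?R' \<Longrightarrow> (y,z) \<in> ?R' \<Longrightarrow> (x,z) \<in> ?R'" for x y z by auto
    have "x \<in> U \<Longrightarrow> (x,a) \<in> ?R' \<and> (a,x) \<in> ?R'" for x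
      unfolding U_def using RR symR ab tr by blast
    then have "U \<times> U \<subseteq> ?R'" using tr by blast
    then show ?thesis using RR by auto
  qed
qed

lemma card_insert_disc:
  fixes a b :: vtx
  assumes fin: "finite B" and a: "a \<in> B" and b: "b \<in> B"
    and nc: "(a,b) \<notin> (open_rel X)\<^sup>*"
  shows "int (card (B // (open_rel (insert {a,b} X))\<^sup>*)) = int (card (B // (open_rel X)\<^sup>*)) - 1"
proof -
  define R where "R = (open_rel X)\<^sup>*"
  define U where "U = R``{a} \<union> R``{b}"
  have eq: "equiv UNIV R" unfolding R_def by (rule equiv_R)
  have reflR: "(x,x) \<in> R" for x unfolding R_def by simp
  have symR: "(x,y) \<in> R \<Longrightarrow> (y,x) \<in> R" for x y unfolding R_def by (rule R_sym)
  have trR: "(x,y) \<in> R \<Longrightarrow> (y,z) \<in> R \<Longrightarrow> (x,z) \<in> R" for x y z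
    unfolding R_def by (rule rtrancl_trans)
  have R': "(open_rel (insert {a,b} X))\<^sup>* = R \<union> U \<times> U"
    unfolding R_def U_def by (rule R_insert_disc)
  define h where "h C = (if C = R``{a} \<or> C = R``{b} then U else C)" for C
  have cls: "(R \<union> U \<times> U)``{x} = h (R``{x})" for x
  proof (cases "x \<in> U")
    case True
    then have "(a,x) \<in> R \<or> (b,x) \<in> R" unfolding U_def by blast
    then have "R``{x} = R``{a} \<or> R``{x} = R``{b}"
      using eq by (metis equiv_class_eq symR)
    moreover have "(R \<union> U \<times> U)``{x} = U"
    proof
      show "(R \<union> U \<times> U)``{x} \<subseteq> U" using True trR unfolding U_def by blast
      show "U \<subseteq> (R \<union> U \<times> U)``{x}" using True by blast
    qed
    ultimately show ?thesis unfolding h_def by auto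
  next
    case False
    then have "R``{x} \<noteq> R``{a}" "R``{x} \<noteq> R``{b}" using reflR unfolding U_def by blast+
    then show ?thesis using False unfolding h_def by auto
  qed
  define Q where "Q = B // R"
  have finQ: "finite Q" unfolding Q_def quotient_image using fin by simp
  have CaQ: "R``{a} \<in> Q" and CbQ: "R``{b} \<in> Q" unfolding Q_def quotient_image using a b by auto
  have neq: "R``{a} \<noteq> R``{b}" using nc reflR unfolding R_def by blast
  have img: "B // (R \<union> U \<times> U) = h ` Q"
    unfolding Q_def quotient_image image_image cls ..
  have img2: "h ` Q = h ` (Q - {R``{b}})"
  proof -
    have "h (R``{b}) = h (R``{a})" unfolding h_def by simp
    then show ?thesis using CaQ CbQ neq by (auto simp: image_iff)
  qed
  have key: "C \<in> Q \<Longrightarrow> C \<noteq> R``{b} \<Longrightarrow> h C = U \<Longrightarrow> C = R``{a}" for C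
  proof -
    assume C: "C \<in> Q" "C \<noteq> R``{b}" "h C = U"
    show "C = R``{a}"
    proof (rule ccontr)
      assume "C \<noteq> R``{a}"
      then have "C = U" using C unfolding h_def by auto
      obtain x where x: "C = R``{x}" using C(1) unfolding Q_def quotient_image by auto
      have "a \<in> C" using \<open>C = U\<close> reflR unfolding U_def by auto
      then have "(x,a) \<in> R" using x by auto
      then have "C = R``{a}" using x eq by (simp add: equiv_class_eq)
      then show False using \<open>C \<noteq> R``{a}\<close> by simp
    qed
  qed
  have inj: "inj_on h (Q - {R``{b}})"
  proof (rule inj_onI)
    fix C C' assume C: "C \<in> Q - {R``{b}}" and C': "C' \<in> Q - {R``{b}}" and hh: "h C = h C'"
    show "C = C'"
    proof (cases "C = R``{a} \<or> C' = R``{a}")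
      case True
      then show ?thesis
      proof
        assume "C = R``{a}"
        then have "h C' = U" using hh unfolding h_def by simp
        then show ?thesis using key C' \<open>C = R``{a}\<close> by auto
      next
        assume "C' = R``{a}"
        then have "h C = U" using hh unfolding h_def by simp
        then show ?thesis using key C \<open>C' = R``{a}\<close> by auto
      qed
    next
      case False
      then show ?thesis using hh C C' unfolding h_def by auto
    qed
  qed
  have "card (B // (R \<union> U \<times> U)) = card (Q - {R``{b}})"
    unfolding img img2 using inj by (simp add: card_image)
  also have "\<dots> = card Q - 1" using CbQ finQ by simp
  finally have "card (B // (R \<union> U \<times> U)) = card Q - 1" .
  moreover have "card Q \<ge> 1" using CaQ finQ by (metis One_nat_def Suc_leI card_gt_0_iff empty_iff)
  ultimately show ?thesis unfolding R' Q_def R_def by simp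
qed

definition kk :: "vtx set \<Rightarrow> edg set \<Rightarrow> int" where
  "kk B X = int (card (B // (open_rel X)\<^sup>*))"

lemma kk_delta_mono:
  assumes fin: "finite B" and a: "a \<in> B" and b: "b \<in> B" and XY: "X \<subseteq> Y"
  shows "kk B X - kk B (insert {a,b} X) \<ge> kk B Y - kk B (insert {a,b} Y)"
proof (cases "(a,b) \<in> (open_rel X)\<^sup>*")
  case True
  then have "(a,b) \<in> (open_rel Y)\<^sup>*" using open_rel_mono[OF XY] by auto
  then show ?thesis using True unfolding kk_def by (simp add: R_insert_conn)
next
  case False
  have "kk B Y - kk B (insert {a,b} Y) \<le> 1"
  proof (cases "(a,b) \<in> (open_rel Y)\<^sup>*")
    case True then show ?thesis unfolding kk_def by (simp add: R_insert_conn)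
  next
    case False then show ?thesis unfolding kk_def using card_insert_disc[OF fin a b False] by simp
  qed
  then show ?thesis unfolding kk_def using card_insert_disc[OF fin a b False] by simp
qed

lemma kk_submod_aux:
  assumes fin: "finite B" and finD: "finite D"
    and edges: "\<forall>e\<in>D. \<exists>a b. e = {a,b} \<and> a \<in> B \<and> b \<in> B"
    and CA: "C \<subseteq> A"
  shows "kk B C - kk B (C \<union> D) \<ge> kk B A - kk B (A \<union> D)"
  using finD edges
proof (induction D rule: finite_induct)
  case empty then show ?case by simp
next
  case (insert e D)
  obtain a b where e: "e = {a,b}" "a \<in> B" "b \<in> B" using insert.prems by auto
  have IH: "kk B C - kk B (C \<union> D) \<ge> kk B A - kk B (A \<union> D)" using insert by auto
  have "kk B (C \<union> D) - kk B (insert {a,b} (C \<union> D)) \<ge> kk B (A \<union> D) - kk B (insert {a,b} (A \<union> D))"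
    using CA by (intro kk_delta_mono[OF fin e(2) e(3)]) auto
  then show ?case using IH e(1) by simp
qed

lemma kk_submod:
  assumes fin: "finite B" and finY: "finite Y"
    and edges: "\<forall>e\<in>Y. \<exists>a b. e = {a,b} \<and> a \<in> B \<and> b \<in> B"
  shows "kk B X + kk B Y \<le> kk B (X \<union> Y) + kk B (X \<inter> Y)"
proof -
  have "kk B (X \<inter> Y) - kk B ((X \<inter> Y) \<union> (Y - X)) \<ge> kk B X - kk B (X \<union> (Y - X))"
    using fin finY edges by (intro kk_submod_aux) auto
  moreover have "(X \<inter> Y) \<union> (Y - X) = Y" "X \<union> (Y - X) = X \<union> Y" by auto
  ultimately show ?thesis by simp
qed

lemma finite_box: "finite (box n)"
  unfolding box_def by simp

lemma box_edges_sub: "box_edges n \<subseteq> Pow (box n)"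
  unfolding box_edges_def by auto

lemma finite_box_edges: "finite (box_edges n)"
  using finite_subset[OF box_edges_sub] finite_box by auto

lemma box_edges_form: "e \<in> box_edges n \<Longrightarrow> \<exists>a b. e = {a,b} \<and> a \<in> box n \<and> b \<in> box n"
  unfolding box_edges_def TE_def by blast

lemma box_edges_TE: "box_edges n \<subseteq> TE"
  unfolding box_edges_def by auto

lemma fk_weight_nonneg: "0 \<le> p \<Longrightarrow> p \<le> 1 \<Longrightarrow> 0 \<le> fk_weight p 2 n Op"
  unfolding fk_weight_def by simp

lemma fk_lattice:
  assumes p: "0 \<le> p" "p \<le> 1" and A: "A \<subseteq> box_edges n" and B: "B \<subseteq> box_edges n"
  shows "fk_weight p 2 n A * fk_weight p 2 n B \<le> fk_weight p 2 n (A \<union> B) * fk_weight p 2 n (A \<inter> B)"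
proof -
  let ?S = "box_edges n"
  have fS: "finite ?S" by (rule finite_box_edges)
  have fA: "finite A" and fB: "finite B" using A B fS finite_subset by auto
  have c1: "card A + card B = card (A \<union> B) + card (A \<inter> B)"
    using card_Un_Int[OF fA fB] by simp
  have e1: "?S - (A \<union> B) = (?S - A) \<inter> (?S - B)" "?S - (A \<inter> B) = (?S - A) \<union> (?S - B)" by auto
  have c2: "card (?S - A) + card (?S - B) = card (?S - (A \<union> B)) + card (?S - (A \<inter> B))"
    unfolding e1 using card_Un_Int[of "?S - A" "?S - B"] fS by simp
  have k: "kk (box n) A + kk (box n) B \<le> kk (box n) (A \<union> B) + kk (box n) (A \<inter> B)"
    using finite_box fB box_edges_form B by (intro kk_submod) auto
  have k': "num_clusters n A + num_clusters n B \<le> num_clusters n (A \<union> B) + num_clusters n (A \<inter> B)"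
    using k unfolding kk_def num_clusters_def by simp
  have "fk_weight p 2 n A * fk_weight p 2 n B
      = p ^ (card A + card B) * (1-p) ^ (card (?S - A) + card (?S - B))
        * (2::real) ^ (num_clusters n A + num_clusters n B)"
    unfolding fk_weight_def by (simp add: power_add algebra_simps)
  also have "\<dots> \<le> p ^ (card (A \<union> B) + card (A \<inter> B)) * (1-p) ^ (card (?S - (A \<union> B)) + card (?S - (A \<inter> B)))
        * (2::real) ^ (num_clusters n (A \<union> B) + num_clusters n (A \<inter> B))"
    unfolding c1 c2 using p k' by (intro mult_left_mono power_increasing) auto
  also have "\<dots> = fk_weight p 2 n (A \<union> B) * fk_weight p 2 n (A \<inter> B)"
    unfolding fk_weight_def by (simp add: power_add algebra_simps)
  finally show ?thesis .
qed

lemma generic_fkg: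
  fixes w Ob F :: "'a set \<Rightarrow> real" and Pg Ps :: "'a set \<Rightarrow> bool"
  assumes fS: "finite S"
    and wnn: "\<And>A. A \<subseteq> S \<Longrightarrow> 0 \<le> w A"
    and wlat: "\<And>A B. A \<subseteq> S \<Longrightarrow> B \<subseteq> S \<Longrightarrow> w A * w B \<le> w (A \<union> B) * w (A \<inter> B)"
    and Onn: "\<And>A. A \<subseteq> S \<Longrightarrow> 0 \<le> Ob A" and Omono: "\<And>A B. A \<subseteq> B \<Longrightarrow> B \<subseteq> S \<Longrightarrow> Ob A \<le> Ob B"
    and Fnn: "\<And>A. A \<subseteq> S \<Longrightarrow> 0 \<le> F A" and Fmono: "\<And>A B. A \<subseteq> B \<Longrightarrow> B \<subseteq> S \<Longrightarrow> F A \<le> F B"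
    and gUn: "\<And>A B. Pg A \<Longrightarrow> Pg B \<Longrightarrow> Pg (A \<union> B)" and gInt: "\<And>A B. Pg A \<Longrightarrow> Pg B \<Longrightarrow> Pg (A \<inter> B)"
    and sgUn: "\<And>A B. Ps A \<Longrightarrow> Pg B \<Longrightarrow> Pg (A \<union> B)" and sgInt: "\<And>A B. Ps A \<Longrightarrow> Pg B \<Longrightarrow> Ps (A \<inter> B)"
  shows "(\<Sum>A\<in>Pow S. (if Ps A then w A * Ob A else 0)) * (\<Sum>A\<in>Pow S. (if Pg A then w A * F A else 0))
       \<le> (\<Sum>A\<in>Pow S. (if Pg A then w A * Ob A * F A else 0)) * (\<Sum>A\<in>Pow S. (if Ps A then w A else 0))"
proof -
  define mg where "mg A = (if Pg A then w A else 0)" for A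
  define ms where "ms A = (if Ps A then w A else 0)" for A
  have mgnn: "A \<subseteq> S \<Longrightarrow> 0 \<le> mg A" for A unfolding mg_def using wnn by auto
  have msnn: "A \<subseteq> S \<Longrightarrow> 0 \<le> ms A" for A unfolding ms_def using wnn by auto
  have st1: "(\<Sum>A\<in>Pow S. mg A * Ob A) * (\<Sum>A\<in>Pow S. mg A * F A) \<le> (\<Sum>A\<in>Pow S. mg A * Ob A * F A) * (\<Sum>A\<in>Pow S. mg A)"
  proof (rule four_functions[OF fS])
    fix A B assume A: "A \<subseteq> S" and B: "B \<subseteq> S"
    show "mg A * Ob A * (mg B * F B) \<le> mg (A \<union> B) * Ob (A \<union> B) * F (A \<union> B) * mg (A \<inter> B)"
    proof (cases "Pg A \<and> Pg B")
      case True
      then have "mg A * Ob A * (mg B * F B) = (w A * w B) * (Ob A * F B)" unfolding mg_def by simp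
      also have "\<dots> \<le> (w (A \<union> B) * w (A \<inter> B)) * (Ob (A \<union> B) * F (A \<union> B))"
        apply (rule mult_mono[OF wlat[OF A B]])
        using A B wnn Onn Fnn Omono Fmono
        by (auto intro!: mult_mono mult_nonneg_nonneg order_trans[OF _ wlat[OF A B]])
      also have "\<dots> = mg (A \<union> B) * Ob (A \<union> B) * F (A \<union> B) * mg (A \<inter> B)"
        unfolding mg_def using True gUn gInt by simp
      finally show ?thesis .
    next
      case False
      then have "mg A * Ob A * (mg B * F B) = 0" unfolding mg_def by auto
      moreover have "0 \<le> mg (A \<union> B) * Ob (A \<union> B) * F (A \<union> B) * mg (A \<inter> B)"
        using A B mgnn Onn Fnn by (auto intro!: mult_nonneg_nonneg mgnn)
      ultimately show ?thesis by auto
    qed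
  qed (use mgnn Onn Fnn in \<open>auto intro!: mult_nonneg_nonneg\<close>)
  have st2: "(\<Sum>A\<in>Pow S. ms A * Ob A) * (\<Sum>A\<in>Pow S. mg A) \<le> (\<Sum>A\<in>Pow S. mg A * Ob A) * (\<Sum>A\<in>Pow S. ms A)"
  proof (rule four_functions[OF fS])
    fix A B assume A: "A \<subseteq> S" and B: "B \<subseteq> S"
    show "ms A * Ob A * mg B \<le> mg (A \<union> B) * Ob (A \<union> B) * ms (A \<inter> B)"
    proof (cases "Ps A \<and> Pg B")
      case True
      then have "ms A * Ob A * mg B = (w A * w B) * Ob A" unfolding ms_def mg_def by simp
      also have "\<dots> \<le> (w (A \<union> B) * w (A \<inter> B)) * Ob (A \<union> B)"
        apply (rule mult_mono[OF wlat[OF A B]])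
        using A B wnn Onn Omono
        by (auto intro!: mult_nonneg_nonneg order_trans[OF _ wlat[OF A B]])
      also have "\<dots> = mg (A \<union> B) * Ob (A \<union> B) * ms (A \<inter> B)"
        unfolding mg_def ms_def using True sgUn sgInt by simp
      finally show ?thesis .
    next
      case False
      then have "ms A * Ob A * mg B = 0" unfolding mg_def ms_def by auto
      moreover have "0 \<le> mg (A \<union> B) * Ob (A \<union> B) * ms (A \<inter> B)"
        using A B mgnn msnn Onn by (auto intro!: mult_nonneg_nonneg mgnn msnn)
      ultimately show ?thesis by auto
    qed
  qed (use mgnn msnn Onn in \<open>auto intro!: mult_nonneg_nonneg\<close>)
  define a where "a = (\<Sum>A\<in>Pow S. mg A * Ob A * F A)"
  define Sg where "Sg = (\<Sum>A\<in>Pow S. mg A)"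
  define Ss where "Ss = (\<Sum>A\<in>Pow S. ms A)"
  define go where "go = (\<Sum>A\<in>Pow S. mg A * Ob A)"
  define so where "so = (\<Sum>A\<in>Pow S. ms A * Ob A)"
  define gf where "gf = (\<Sum>A\<in>Pow S. mg A * F A)"
  have nn: "0 \<le> a" "0 \<le> Sg" "0 \<le> Ss" "0 \<le> go" "0 \<le> so" "0 \<le> gf"
    unfolding a_def Sg_def Ss_def go_def so_def gf_def using mgnn msnn Onn Fnn
    by (auto intro!: sum_nonneg mult_nonneg_nonneg)
  have "so * gf \<le> a * Ss"
  proof (cases "Sg = 0")
    case True
    then have "\<forall>A\<in>Pow S. mg A = 0" unfolding Sg_def using sum_nonneg_eq_0_iff[of "Pow S" mg] fS mgnn by auto
    then have "gf = 0" unfolding gf_def by simp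
    then show ?thesis using nn by simp
  next
    case False
    then have Sgp: "Sg > 0" using nn by simp
    have "(so * gf) * Sg = (so * Sg) * gf" by simp
    also have "\<dots> \<le> (go * Ss) * gf" using st2 nn unfolding so_def Sg_def go_def Ss_def
      by (intro mult_right_mono) auto
    also have "\<dots> = Ss * (go * gf)" by simp
    also have "\<dots> \<le> Ss * (a * Sg)" using st1 nn unfolding go_def gf_def a_def Sg_def
      by (intro mult_left_mono) auto
    finally have "(so * gf) * Sg \<le> (a * Ss) * Sg" by (simp add: mult.commute mult.left_commute)
    then show ?thesis using Sgp by simp
  qed
  moreover have "(\<Sum>A\<in>Pow S. (if Ps A then w A * Ob A else 0)) = so"
    unfolding so_def ms_def by (intro sum.cong) auto
  moreover have "(\<Sum>A\<in>Pow S. (if Pg A then w A * F A else 0)) = gf"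
    unfolding gf_def mg_def by (intro sum.cong) auto
  moreover have "(\<Sum>A\<in>Pow S. (if Pg A then w A * Ob A * F A else 0)) = a"
    unfolding a_def mg_def by (intro sum.cong) auto
  moreover have "(\<Sum>A\<in>Pow S. (if Ps A then w A else 0)) = Ss"
    unfolding Ss_def ms_def by (intro sum.cong) auto
  ultimately show ?thesis by simp
qed

definition emask :: "nat \<Rightarrow> (edg \<Rightarrow> bool) \<Rightarrow> (edg \<Rightarrow> bool)" where
  "emask m \<eta> = (\<lambda>e. \<eta> e \<and> e \<in> box_edges m)"

lemma connected_refl: "connected \<eta> u u"
  unfolding connected_def by simp

lemma connected_trans: "connected \<eta> u v \<Longrightarrow> connected \<eta> v w \<Longrightarrow> connected \<eta> u w"
  unfolding connected_def by (rule rtrancl_trans)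

lemma connected_sym: "connected \<eta> u v \<Longrightarrow> connected \<eta> v u"
proof -
  have "sym {(a, b). {a, b} \<in> TE \<and> \<eta> {a, b}}" unfolding sym_def by (auto simp: insert_commute)
  then show "connected \<eta> u v \<Longrightarrow> connected \<eta> v u"
    unfolding connected_def by (rule symD[OF sym_rtrancl])
qed

lemma connected_mono:
  assumes "\<And>x. \<eta> x \<Longrightarrow> \<eta>' x" "connected \<eta> u v"
  shows "connected \<eta>' u v"
  using assms(2) unfolding connected_def
  by (rule rtrancl_mono[THEN subsetD, rotated]) (auto intro: assms(1))

lemma rep_conn: "connected \<eta> v (rep \<eta> v)"
  unfolding rep_def using arg_min_nat_lemma[of "connected \<eta> v" v to_nat] connected_refl by blast

lemma rep_min: "connected \<eta> v w \<Longrightarrow> to_nat (rep \<eta> v) \<le> to_nat w"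
  unfolding rep_def using arg_min_nat_lemma[of "connected \<eta> v" w to_nat] by blast

lemma rep_eq_iff: "rep \<eta> v = rep \<eta> v' \<longleftrightarrow> connected \<eta> v v'"
proof
  assume "rep \<eta> v = rep \<eta> v'"
  then show "connected \<eta> v v'"
    using rep_conn[of \<eta> v] rep_conn[of \<eta> v'] connected_sym connected_trans by metis
next
  assume c: "connected \<eta> v v'"
  have "connected \<eta> v = connected \<eta> v'"
    using c connected_sym connected_trans by blast
  then show "rep \<eta> v = rep \<eta> v'" unfolding rep_def by simp
qed

lemma card_rep_mono:
  assumes "finite V" and h: "\<And>v v'. v \<in> V \<Longrightarrow> v' \<in> V \<Longrightarrow> connected \<eta> v v' \<Longrightarrow> connected \<eta>' v v'"
  shows "card (rep \<eta>' ` V) \<le> card (rep \<eta> ` V)"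
proof -
  define \<phi> where "\<phi> x = rep \<eta>' (SOME v. v \<in> V \<and> rep \<eta> v = x)" for x
  have "rep \<eta>' ` V = \<phi> ` (rep \<eta> ` V)"
  proof -
    have "\<phi> (rep \<eta> v) = rep \<eta>' v" if v: "v \<in> V" for v
    proof -
      define u where "u = (SOME u. u \<in> V \<and> rep \<eta> u = rep \<eta> v)"
      have "u \<in> V \<and> rep \<eta> u = rep \<eta> v" unfolding u_def by (rule someI[of _ v]) (use v in auto)
      then have "connected \<eta>' u v" using h v rep_eq_iff by blast
      then show ?thesis unfolding \<phi>_def u_def[symmetric] using rep_eq_iff by blast
    qed
    then show ?thesis by (auto simp: image_image image_iff)
  qed
  then show ?thesis using assms(1) by (simp add: card_image_le)
qed

lemma box_mono: "M \<le> m \<Longrightarrow> box M \<subseteq> box m"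
  unfolding box_def by auto

lemma box_edges_mono: "M \<le> m \<Longrightarrow> box_edges M \<subseteq> box_edges m"
  unfolding box_edges_def using box_mono by blast

lemma in_box: "x \<in> box (nat (max \<bar>fst x\<bar> \<bar>snd x\<bar>))"
  unfolding box_def by (cases x) auto

lemma edge_in_box_edges:
  assumes "{x,y} \<in> TE"
  shows "\<exists>M. \<forall>m\<ge>M. {x,y} \<in> box_edges m"
proof -
  define M where "M = max (nat (max \<bar>fst x\<bar> \<bar>snd x\<bar>)) (nat (max \<bar>fst y\<bar> \<bar>snd y\<bar>))"
  have "x \<in> box M" "y \<in> box M" using in_box box_mono unfolding M_def by (meson max.cobounded1 max.cobounded2 subsetD)+
  then have "\<forall>m\<ge>M. {x,y} \<in> box_edges m" using assms box_mono unfolding box_edges_def by blast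
  then show ?thesis by blast
qed

lemma connected_mask_eventually:
  assumes "connected \<eta> u v"
  shows "\<exists>M. \<forall>m\<ge>M. connected (emask m \<eta>) u v"
  using assms unfolding connected_def
proof (induction rule: rtrancl_induct)
  case base then show ?case by auto
next
  case (step y z)
  then obtain M1 where M1: "\<forall>m\<ge>M1. (u, y) \<in> {(a, b). {a, b} \<in> TE \<and> emask m \<eta> {a, b}}\<^sup>*" by blast
  from step.hyps(2) have yz: "{y,z} \<in> TE" "\<eta> {y,z}" by auto
  obtain M2 where M2: "\<forall>m\<ge>M2. {y,z} \<in> box_edges m" using edge_in_box_edges[OF yz(1)] by blast
  have "\<forall>m\<ge>max M1 M2. (u, z) \<in> {(a, b). {a, b} \<in> TE \<and> emask m \<eta> {a, b}}\<^sup>*"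
  proof (intro allI impI)
    fix m assume m: "max M1 M2 \<le> m"
    have "(y,z) \<in> {(a, b). {a, b} \<in> TE \<and> emask m \<eta> {a, b}}"
      using yz M2 m unfolding emask_def by auto
    then show "(u, z) \<in> {(a, b). {a, b} \<in> TE \<and> emask m \<eta> {a, b}}\<^sup>*"
      using M1 m by (meson max.boundedE rtrancl.rtrancl_into_rtrancl)
  qed
  then show ?case by blast
qed

lemma connected_mask_le: "connected (emask m \<eta>) u v \<Longrightarrow> connected \<eta> u v"
  by (rule connected_mono[of "emask m \<eta>"]) (auto simp: emask_def)

lemma inj_to_nat_vtx: "to_nat x = to_nat y \<Longrightarrow> (x::vtx) = y"
  by simp

lemma rep_mask_eventually: "\<exists>M. \<forall>m\<ge>M. rep (emask m \<eta>) v = rep \<eta> v"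
proof -
  obtain M where M: "\<forall>m\<ge>M. connected (emask m \<eta>) v (rep \<eta> v)"
    using connected_mask_eventually[OF rep_conn] by blast
  have "rep (emask m \<eta>) v = rep \<eta> v" if m: "m \<ge> M" for m
  proof -
    have c: "connected (emask m \<eta>) v (rep \<eta> v)" using M m by blast
    have "to_nat (rep (emask m \<eta>) v) \<le> to_nat (rep \<eta> v)" using rep_min[OF c] .
    moreover have "connected \<eta> v (rep (emask m \<eta>) v)" using connected_mask_le rep_conn by blast
    then have "to_nat (rep \<eta> v) \<le> to_nat (rep (emask m \<eta>) v)" by (rule rep_min)
    ultimately show ?thesis by (intro inj_to_nat_vtx) simp
  qed
  then show ?thesis by blast
qed

lemma rep_mask_eventually_set:
  assumes "finite V"
  shows "\<exists>M. \<forall>m\<ge>M. rep (emask m \<eta>) ` V = rep \<eta> ` V"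
  using assms
proof (induction V rule: finite_induct)
  case empty then show ?case by simp
next
  case (insert v V)
  then obtain M1 where M1: "\<forall>m\<ge>M1. rep (emask m \<eta>) ` V = rep \<eta> ` V" by blast
  obtain M2 where M2: "\<forall>m\<ge>M2. rep (emask m \<eta>) v = rep \<eta> v" using rep_mask_eventually by blast
  have "\<forall>m\<ge>max M1 M2. rep (emask m \<eta>) ` insert v V = rep \<eta> ` insert v V" using M1 M2 by auto
  then show ?case by blast
qed

lemma space_Omega_E: "space Omega_E = (\<Pi>\<^sub>E e\<in>TE. (UNIV :: bool set))"
  unfolding Omega_E_def by (simp add: space_PiM)

lemma coord_meas: "e \<in> TE \<Longrightarrow> (\<lambda>\<eta>. \<eta> e) \<in> measurable Omega_E (count_space UNIV)"
  unfolding Omega_E_def by (rule measurable_component_singleton)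

lemma cfg_space: "cfg Op \<in> space Omega_E"
  unfolding space_Omega_E cfg_def by auto

definition cyl :: "edg set \<Rightarrow> ((edg \<Rightarrow> bool) \<Rightarrow> 'b) \<Rightarrow> bool" where
  "cyl F G \<longleftrightarrow> (\<forall>\<eta>\<in>space Omega_E. \<forall>\<eta>'\<in>space Omega_E. (\<forall>e\<in>F. \<eta> e = \<eta>' e) \<longrightarrow> G \<eta> = G \<eta>')"

lemma cyl_set_sets:
  assumes F: "finite F" "F \<subseteq> TE"
    and A: "A \<subseteq> space Omega_E"
    and dep: "\<forall>\<eta>\<in>space Omega_E. \<forall>\<eta>'\<in>space Omega_E. (\<forall>e\<in>F. \<eta> e = \<eta>' e) \<longrightarrow> (\<eta> \<in> A \<longleftrightarrow> \<eta>' \<in> A)"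
  shows "A \<in> sets Omega_E"
proof -
  define C where "C \<xi> = {\<eta> \<in> space Omega_E. \<forall>e\<in>F. \<eta> e = \<xi> e}" for \<xi> :: "edg \<Rightarrow> bool"
  have Cmeas: "C \<xi> \<in> sets Omega_E" for \<xi>
  proof -
    have "C \<xi> = space Omega_E \<inter> (\<Inter>e\<in>F. (\<lambda>\<eta>. \<eta> e) -` {\<xi> e} \<inter> space Omega_E)"
      unfolding C_def by auto
    also have "\<dots> \<in> sets Omega_E"
    proof (cases "F = {}")
      case True then show ?thesis by simp
    next
      case False
      have "(\<Inter>e\<in>F. (\<lambda>\<eta>. \<eta> e) -` {\<xi> e} \<inter> space Omega_E) \<in> sets Omega_E"
        using F False by (intro sets.finite_INT) (auto intro!: measurable_sets[OF coord_meas])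
      then show ?thesis by auto
    qed
    finally show ?thesis .
  qed
  have Crestr: "C \<eta> = C (restrict \<eta> F)" for \<eta> unfolding C_def by auto
  have "A = (\<Union>\<xi>\<in>(\<lambda>\<eta>. restrict \<eta> F) ` A. C \<xi>)"
  proof
    show "A \<subseteq> (\<Union>\<xi>\<in>(\<lambda>\<eta>. restrict \<eta> F) ` A. C \<xi>)"
    proof
      fix \<eta> assume "\<eta> \<in> A"
      then have "\<eta> \<in> C (restrict \<eta> F)" using A unfolding C_def by auto
      then show "\<eta> \<in> (\<Union>\<xi>\<in>(\<lambda>\<eta>. restrict \<eta> F) ` A. C \<xi>)" using \<open>\<eta> \<in> A\<close> by blast
    qed
    show "(\<Union>\<xi>\<in>(\<lambda>\<eta>. restrict \<eta> F) ` A. C \<xi>) \<subseteq> A"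
    proof
      fix \<eta>' assume "\<eta>' \<in> (\<Union>\<xi>\<in>(\<lambda>\<eta>. restrict \<eta> F) ` A. C \<xi>)"
      then obtain \<eta> where \<eta>: "\<eta> \<in> A" "\<eta>' \<in> C (restrict \<eta> F)" by blast
      then have "\<eta>' \<in> space Omega_E" "\<forall>e\<in>F. \<eta>' e = \<eta> e" unfolding C_def by auto
      then show "\<eta>' \<in> A" using dep \<eta>(1) A by blast
    qed
  qed
  moreover have "finite ((\<lambda>\<eta>. restrict \<eta> F) ` A)"
  proof (rule finite_subset)
    show "(\<lambda>\<eta>. restrict \<eta> F) ` A \<subseteq> (\<Pi>\<^sub>E e\<in>F. (UNIV :: bool set))" by auto
    show "finite (\<Pi>\<^sub>E e\<in>F. (UNIV :: bool set))" using F by (intro finite_PiE) auto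
  qed
  ultimately show ?thesis using Cmeas by (metis sets.finite_UN)
qed

lemma cyl_level_sets:
  assumes F: "finite F" "F \<subseteq> TE" and G: "cyl F G"
  shows "{\<eta> \<in> space Omega_E. P (G \<eta>)} \<in> sets Omega_E"
proof (rule cyl_set_sets[OF F])
  show "{\<eta> \<in> space Omega_E. P (G \<eta>)} \<subseteq> space Omega_E" by blast
  show "\<forall>\<eta>\<in>space Omega_E. \<forall>\<eta>'\<in>space Omega_E. (\<forall>e\<in>F. \<eta> e = \<eta>' e) \<longrightarrow>
      (\<eta> \<in> {\<eta> \<in> space Omega_E. P (G \<eta>)}) = (\<eta>' \<in> {\<eta> \<in> space Omega_E. P (G \<eta>)})"
  proof (intro ballI impI)
    fix \<eta> \<eta>' assume h: "\<eta> \<in> space Omega_E" "\<eta>' \<in> space Omega_E" "\<forall>e\<in>F. \<eta> e = \<eta>' e"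
    have "G \<eta> = G \<eta>'" using G h unfolding cyl_def by blast
    then show "(\<eta> \<in> {\<eta> \<in> space Omega_E. P (G \<eta>)}) = (\<eta>' \<in> {\<eta> \<in> space Omega_E. P (G \<eta>)})"
      using h by simp
  qed
qed

lemma sum_levels:
  fixes G :: "'a \<Rightarrow> real"
  assumes "finite Vals" "G x \<in> Vals"
  shows "G x = (\<Sum>y\<in>Vals. y * indicator {z. G z = y} x)"
proof -
  have "(\<Sum>y\<in>Vals. y * indicator {z. G z = y} x) = (\<Sum>y\<in>Vals. if y = G x then y else 0)"
    by (intro sum.cong) (auto simp: indicator_def)
  also have "\<dots> = G x" using assms by (simp add: sum.delta')
  finally show ?thesis by simp
qed

lemma cyl_borel:
  fixes G :: "(edg \<Rightarrow> bool) \<Rightarrow> real"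
  assumes F: "finite F" "F \<subseteq> TE" and G: "cyl F G"
    and V: "finite Vals" "\<And>\<eta>. \<eta> \<in> space Omega_E \<Longrightarrow> G \<eta> \<in> Vals"
  shows "G \<in> borel_measurable Omega_E"
proof -
  define L where "L y = {\<eta> \<in> space Omega_E. G \<eta> = y}" for y
  have L: "L y \<in> sets Omega_E" for y unfolding L_def by (rule cyl_level_sets[OF F G])
  have "(\<lambda>\<eta>. \<Sum>y\<in>Vals. y * indicator (L y) \<eta>) \<in> borel_measurable Omega_E"
    using L by (intro borel_measurable_sum borel_measurable_times borel_measurable_const borel_measurable_indicator)
  moreover have "\<eta> \<in> space Omega_E \<Longrightarrow> G \<eta> = (\<Sum>y\<in>Vals. y * indicator (L y) \<eta>)" for \<eta>
    using sum_levels[of Vals G \<eta>, OF V(1) V(2)] unfolding L_def by (simp add: indicator_def)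
  ultimately show ?thesis by (metis (no_types, lifting) measurable_cong)
qed

definition fkE :: "real \<Rightarrow> real \<Rightarrow> nat \<Rightarrow> ((edg \<Rightarrow> bool) \<Rightarrow> real) \<Rightarrow> real" where
  "fkE p q n G = (\<Sum>Op\<in>Pow (box_edges n). fk_weight p q n Op * G (cfg Op))
     / (\<Sum>Op\<in>Pow (box_edges n). fk_weight p q n Op)"

lemma fk_limit_fun:
  fixes G :: "(edg \<Rightarrow> bool) \<Rightarrow> real"
  assumes lim: "FK_free_limit p q \<nu>"
    and F: "finite F" "F \<subseteq> TE" and G: "cyl F G"
    and V: "finite Vals" "\<And>\<eta>. \<eta> \<in> space Omega_E \<Longrightarrow> G \<eta> \<in> Vals"
  shows "(\<lambda>n. fkE p q n G) \<longlonglongrightarrow> integral\<^sup>L \<nu> G"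
proof -
  have ps: "prob_space \<nu>" and sets: "sets \<nu> = sets Omega_E" using lim unfolding FK_free_limit_def by auto
  interpret prob_space \<nu> by (rule ps)
  have sp: "space \<nu> = space Omega_E" using sets by (rule sets_eq_imp_space_eq)
  define L where "L y = {\<eta> \<in> space Omega_E. G \<eta> = y}" for y
  have L: "L y \<in> sets Omega_E" for y unfolding L_def by (rule cyl_level_sets[OF F G])
  have Ldep: "\<forall>\<eta>\<in>space Omega_E. \<forall>\<eta>'\<in>space Omega_E. (\<forall>e\<in>F. \<eta> e = \<eta>' e) \<longrightarrow> (\<eta> \<in> L y \<longleftrightarrow> \<eta>' \<in> L y)" for y
  proof (intro ballI impI)
    fix \<eta> \<eta>' assume h: "\<eta> \<in> space Omega_E" "\<eta>' \<in> space Omega_E" "\<forall>e\<in>F. \<eta> e = \<eta>' e"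
    have "G \<eta> = G \<eta>'" using G h unfolding cyl_def by blast
    then show "(\<eta> \<in> L y) = (\<eta>' \<in> L y)" using h unfolding L_def by simp
  qed
  have lims: "(\<lambda>n. fk_free p q n (L y)) \<longlonglongrightarrow> measure \<nu> (L y)" for y
  proof -
    have "\<forall>A F. finite F \<and> F \<subseteq> TE \<and> A \<in> sets Omega_E \<and>
        (\<forall>\<eta>\<in>space Omega_E. \<forall>\<eta>'\<in>space Omega_E. (\<forall>e\<in>F. \<eta> e = \<eta>' e) \<longrightarrow> (\<eta> \<in> A \<longleftrightarrow> \<eta>' \<in> A))
        \<longrightarrow> (\<lambda>n. fk_free p q n A) \<longlonglongrightarrow> measure \<nu> A"
      using lim unfolding FK_free_limit_def by (elim conjE)
    then show ?thesis using F L[of y] Ldep[of y] by (elim allE[of _ "L y"] allE[of _ F]) (simp only: simp_thms)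
  qed
  have Gsum: "\<eta> \<in> space Omega_E \<Longrightarrow> G \<eta> = (\<Sum>y\<in>Vals. y * indicator (L y) \<eta>)" for \<eta>
    using sum_levels[of Vals G \<eta>, OF V(1) V(2)] unfolding L_def by (simp add: indicator_def)
  have eq: "fkE p q n G = (\<Sum>y\<in>Vals. y * fk_free p q n (L y))" for n
  proof -
    let ?Z = "(\<Sum>Op\<in>Pow (box_edges n). fk_weight p q n Op)"
    have "(\<Sum>Op\<in>Pow (box_edges n). fk_weight p q n Op * G (cfg Op))
        = (\<Sum>Op\<in>Pow (box_edges n). \<Sum>y\<in>Vals. y * (if cfg Op \<in> L y then fk_weight p q n Op else 0))"
    proof (intro sum.cong refl)
      fix Op
      have "fk_weight p q n Op * G (cfg Op) = (\<Sum>y\<in>Vals. fk_weight p q n Op * (y * indicator (L y) (cfg Op)))"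
        by (simp only: Gsum[OF cfg_space] sum_distrib_left)
      also have "\<dots> = (\<Sum>y\<in>Vals. y * (if cfg Op \<in> L y then fk_weight p q n Op else 0))"
        by (intro sum.cong refl) (simp add: indicator_def)
      finally show "fk_weight p q n Op * G (cfg Op) = (\<Sum>y\<in>Vals. y * (if cfg Op \<in> L y then fk_weight p q n Op else 0))" .
    qed
    also have "\<dots> = (\<Sum>y\<in>Vals. y * (\<Sum>Op\<in>Pow (box_edges n). (if cfg Op \<in> L y then fk_weight p q n Op else 0)))"
      by (subst sum.swap) (simp add: sum_distrib_left)
    finally have "fkE p q n G = (\<Sum>y\<in>Vals. y * (\<Sum>Op\<in>Pow (box_edges n). (if cfg Op \<in> L y then fk_weight p q n Op else 0))) / ?Z"
      unfolding fkE_def by simp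
    also have "\<dots> = (\<Sum>y\<in>Vals. y * (\<Sum>Op\<in>Pow (box_edges n). (if cfg Op \<in> L y then fk_weight p q n Op else 0)) / ?Z)"
      by (simp add: sum_divide_distrib)
    finally show ?thesis unfolding fk_free_def by simp
  qed
  have "(\<lambda>n. \<Sum>y\<in>Vals. y * fk_free p q n (L y)) \<longlonglongrightarrow> (\<Sum>y\<in>Vals. y * measure \<nu> (L y))"
    by (intro tendsto_sum tendsto_mult_left lims)
  moreover have "integral\<^sup>L \<nu> G = (\<Sum>y\<in>Vals. y * measure \<nu> (L y))"
  proof -
    have "integral\<^sup>L \<nu> G = integral\<^sup>L \<nu> (\<lambda>\<eta>. \<Sum>y\<in>Vals. y * indicator (L y) \<eta>)"
    proof (rule Bochner_Integration.integral_cong[OF refl])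
      fix x assume "x \<in> space \<nu>"
      then show "G x = (\<Sum>y\<in>Vals. y * indicator (L y) x)" using sp by (intro Gsum) simp
    qed
    also have "\<dots> = (\<Sum>y\<in>Vals. y * measure \<nu> (L y))"
    proof -
      have Ls: "L y \<in> sets \<nu>" for y using L sets by simp
      have "integral\<^sup>L \<nu> (\<lambda>\<eta>. \<Sum>y\<in>Vals. y * indicator (L y) \<eta>) = (\<Sum>y\<in>Vals. integral\<^sup>L \<nu> (\<lambda>\<eta>. y * indicator (L y) \<eta>))"
        by (rule Bochner_Integration.integral_sum) (intro integrable_mult_right integrable_real_indicator Ls, simp add: emeasure_finite less_top[symmetric])
      also have "\<dots> = (\<Sum>y\<in>Vals. y * measure \<nu> (L y))"
      proof (intro sum.cong refl)
        fix y
        have "L y \<inter> space \<nu> = L y" using sp unfolding L_def by auto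
        then show "integral\<^sup>L \<nu> (\<lambda>\<eta>. y * indicator (L y) \<eta>) = y * measure \<nu> (L y)" by simp
      qed
      finally show ?thesis .
    qed
    finally show ?thesis .
  qed
  ultimately show ?thesis unfolding eq by simp
qed

lemma mask_cyl: "cyl (box_edges m) (\<lambda>\<eta>. f (emask m \<eta>))"
proof -
  have "emask m \<eta> = emask m \<eta>'" if "\<forall>e\<in>box_edges m. \<eta> e = \<eta>' e" for \<eta> \<eta>'
    using that unfolding emask_def by (auto simp: fun_eq_iff)
  then show ?thesis unfolding cyl_def by metis
qed

lemma rep_meas: "(\<lambda>\<eta>. rep \<eta> v) \<in> measurable Omega_E (count_space UNIV)"
proof (subst measurable_count_space_eq2_countable, intro conjI ballI)
  show "(\<lambda>\<eta>. rep \<eta> v) \<in> space Omega_E \<rightarrow> UNIV" by simp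
  fix w :: vtx
  have lev: "{\<eta> \<in> space Omega_E. rep (emask m \<eta>) v = w} \<in> sets Omega_E" for m
    using cyl_level_sets[OF finite_box_edges box_edges_TE mask_cyl[of m "\<lambda>\<eta>. rep \<eta> v"], of "\<lambda>x. x = w"] .
  have eq: "(\<lambda>\<eta>. rep \<eta> v) -` {w} \<inter> space Omega_E = (\<Union>M. \<Inter>m\<in>{M..}. {\<eta> \<in> space Omega_E. rep (emask m \<eta>) v = w})"
  proof (intro equalityI subsetI)
    fix \<eta> assume h: "\<eta> \<in> (\<lambda>\<eta>. rep \<eta> v) -` {w} \<inter> space Omega_E"
    obtain M where "\<forall>m\<ge>M. rep (emask m \<eta>) v = rep \<eta> v" using rep_mask_eventually by blast
    then show "\<eta> \<in> (\<Union>M. \<Inter>m\<in>{M..}. {\<eta> \<in> space Omega_E. rep (emask m \<eta>) v = w})" using h by auto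
  next
    fix \<eta> assume "\<eta> \<in> (\<Union>M. \<Inter>m\<in>{M..}. {\<eta> \<in> space Omega_E. rep (emask m \<eta>) v = w})"
    then obtain M where M: "\<forall>m\<ge>M. rep (emask m \<eta>) v = w" "\<eta> \<in> space Omega_E" by auto
    obtain M' where "\<forall>m\<ge>M'. rep (emask m \<eta>) v = rep \<eta> v" using rep_mask_eventually by blast
    then have "rep \<eta> v = w" using M(1)[rule_format, of "max M M'"] by simp
    then show "\<eta> \<in> (\<lambda>\<eta>. rep \<eta> v) -` {w} \<inter> space Omega_E" using M(2) by simp
  qed
  have "(\<Inter>m\<in>{M..}. {\<eta> \<in> space Omega_E. rep (emask m \<eta>) v = w}) \<in> sets Omega_E" for M
    using lev by (intro sets.countable_INT') auto
  then have "(\<Union>M. \<Inter>m\<in>{M..}. {\<eta> \<in> space Omega_E. rep (emask m \<eta>) v = w}) \<in> sets Omega_E"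
    by (intro sets.countable_UN') auto
  then show "(\<lambda>\<eta>. rep \<eta> v) -` {w} \<inter> space Omega_E \<in> sets Omega_E" using eq by simp
qed

definition cpow :: "real \<Rightarrow> vtx set \<Rightarrow> (edg \<Rightarrow> bool) \<Rightarrow> real" where
  "cpow c W \<eta> = c ^ card (rep \<eta> ` W)"

lemma cpow_mask_cyl: "cyl (box_edges m) (\<lambda>\<eta>. cpow c W (emask m \<eta>))"
  by (rule mask_cyl)

lemma cpow_vals: "finite W \<Longrightarrow> cpow c W \<eta> \<in> (\<lambda>j. c ^ j) ` {..card W}"
  unfolding cpow_def using card_image_le by auto

lemma cpow_mask_borel: "finite W \<Longrightarrow> (\<lambda>\<eta>. cpow c W (emask m \<eta>)) \<in> borel_measurable Omega_E"
  by (rule cyl_borel[OF finite_box_edges box_edges_TE cpow_mask_cyl, of "(\<lambda>j. c ^ j) ` {..card W}"])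
     (auto intro: cpow_vals)

lemma cpow_mask_lim: "finite W \<Longrightarrow> (\<lambda>m. cpow c W (emask m \<eta>)) \<longlonglongrightarrow> cpow c W \<eta>"
proof -
  assume W: "finite W"
  obtain M where "\<forall>m\<ge>M. rep (emask m \<eta>) ` W = rep \<eta> ` W" using rep_mask_eventually_set[OF W] by blast
  then have "eventually (\<lambda>m. cpow c W \<eta> = cpow c W (emask m \<eta>)) sequentially"
    unfolding cpow_def eventually_sequentially by (intro exI[of _ M]) auto
  then show ?thesis by (rule Lim_transform_eventually[OF tendsto_const])
qed

lemma cpow_borel: "finite W \<Longrightarrow> cpow c W \<in> borel_measurable Omega_E"
  by (rule borel_measurable_LIMSEQ_real[OF cpow_mask_lim cpow_mask_borel])

definition SPM :: "real \<Rightarrow> (vtx \<Rightarrow> int) measure" where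
  "SPM r = (\<Pi>\<^sub>M v\<in>(UNIV :: vtx set). measure_pmf (spin_pmf r))"

definition NN :: "((edg \<Rightarrow> bool) \<times> (vtx \<Rightarrow> int)) measure" where
  "NN = Omega_E \<Otimes>\<^sub>M (\<Pi>\<^sub>M v\<in>(UNIV :: vtx set). count_space (UNIV :: int set))"

definition fmap :: "(edg \<Rightarrow> bool) \<times> (vtx \<Rightarrow> int) \<Rightarrow> (edg \<Rightarrow> bool) \<times> (vtx \<Rightarrow> int)" where
  "fmap = (\<lambda>(\<eta>, \<tau>). (\<eta>, \<lambda>v. \<tau> (rep \<eta> v)))"

lemma P_joint_eq: "P_joint \<nu> r = distr (\<nu> \<Otimes>\<^sub>M SPM r) NN fmap"
  unfolding P_joint_def SPM_def NN_def fmap_def ..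

lemma prob_SPM: "prob_space (SPM r)"
  unfolding SPM_def by (rule prob_space_PiM) (rule prob_space_measure_pmf)

lemma fmap_meas:
  assumes sets: "sets \<nu> = sets Omega_E"
  shows "fmap \<in> measurable (\<nu> \<Otimes>\<^sub>M SPM r) NN"
proof -
  have fst_m: "fst \<in> measurable (\<nu> \<Otimes>\<^sub>M SPM r) Omega_E"
    using measurable_fst[of \<nu> "SPM r"] by (subst (asm) measurable_cong_sets[OF refl sets])
  have rep_m: "(\<lambda>x. rep (fst x) v) \<in> measurable (\<nu> \<Otimes>\<^sub>M SPM r) (count_space UNIV)" for v
    by (rule measurable_compose[OF fst_m rep_meas])
  have comp_m: "(\<lambda>x. snd x w) \<in> measurable (\<nu> \<Otimes>\<^sub>M SPM r) (count_space UNIV)" for w :: vtx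
  proof -
    have "(\<lambda>x. x w) \<in> measurable (SPM r) (measure_pmf (spin_pmf r))"
      unfolding SPM_def by (rule measurable_component_singleton) simp
    then have "(\<lambda>x. x w) \<in> measurable (SPM r) (count_space UNIV)"
      using measurable_cong_sets[OF refl sets_measure_pmf_count_space] by simp
    then show ?thesis by (rule measurable_compose[OF measurable_snd])
  qed
  have snd_m: "(\<lambda>x. \<lambda>v. snd x (rep (fst x) v)) \<in> measurable (\<nu> \<Otimes>\<^sub>M SPM r) (\<Pi>\<^sub>M v\<in>(UNIV :: vtx set). count_space (UNIV :: int set))"
  proof (rule measurable_PiM_single')
    fix v :: vtx
    show "(\<lambda>x. snd x (rep (fst x) v)) \<in> measurable (\<nu> \<Otimes>\<^sub>M SPM r) (count_space UNIV)"
      using measurable_compose_countable[where f="\<lambda>w x. snd x w" and g="\<lambda>x. rep (fst x) v", OF comp_m rep_m] .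
  qed simp
  have "(\<lambda>x. (fst x, \<lambda>v. snd x (rep (fst x) v))) \<in> measurable (\<nu> \<Otimes>\<^sub>M SPM r) NN"
    unfolding NN_def by (rule measurable_Pair[OF fst_m snd_m])
  moreover have "fmap = (\<lambda>x. (fst x, \<lambda>v. snd x (rep (fst x) v)))"
    unfolding fmap_def by (auto simp: fun_eq_iff split: prod.splits)
  ultimately show ?thesis by simp
qed

lemma snd_sets: "{\<omega> \<in> space NN. snd \<omega> v = \<kappa>} \<in> sets NN"
proof -
  have m: "(\<lambda>\<omega>. snd \<omega> v) \<in> measurable NN (count_space UNIV)"
    unfolding NN_def by (rule measurable_compose[OF measurable_snd measurable_component_singleton]) simp
  have "(\<lambda>\<omega>. snd \<omega> v) -` {\<kappa>} \<inter> space NN \<in> sets NN" by (rule measurable_sets[OF m]) simp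
  moreover have "{\<omega> \<in> space NN. snd \<omega> v = \<kappa>} = (\<lambda>\<omega>. snd \<omega> v) -` {\<kappa>} \<inter> space NN" by blast
  ultimately show ?thesis by simp
qed

lemma snd_all_sets: "finite W \<Longrightarrow> {\<omega> \<in> space NN. \<forall>v\<in>W. snd \<omega> v = \<kappa>} \<in> sets NN"
proof (induction W rule: finite_induct)
  case empty then show ?case by simp
next
  case (insert v W)
  have "{\<omega> \<in> space NN. \<forall>u\<in>insert v W. snd \<omega> u = \<kappa>} = {\<omega> \<in> space NN. snd \<omega> v = \<kappa>} \<inter> {\<omega> \<in> space NN. \<forall>u\<in>W. snd \<omega> u = \<kappa>}"
    by blast
  then show ?case by (simp only:) (rule sets.Int[OF snd_sets insert.IH])
qed

lemma event_sets:
  assumes B: "B \<in> sets Omega_E" and W: "finite W"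
  shows "{\<omega> \<in> space NN. fst \<omega> \<in> B \<and> (\<forall>v\<in>W. snd \<omega> v = \<kappa>)} \<in> sets NN"
proof -
  have "fst -` B \<inter> space NN \<in> sets NN" unfolding NN_def by (rule measurable_sets[OF measurable_fst B])
  moreover have "{\<omega> \<in> space NN. fst \<omega> \<in> B \<and> (\<forall>v\<in>W. snd \<omega> v = \<kappa>)} = (fst -` B \<inter> space NN) \<inter> {\<omega> \<in> space NN. \<forall>v\<in>W. snd \<omega> v = \<kappa>}"
    by blast
  ultimately show ?thesis by (simp only:) (rule sets.Int[OF _ snd_all_sets[OF W]])
qed

lemma space_SPM: "space (SPM r) = UNIV"
  unfolding SPM_def by (simp add: space_PiM PiE_def extensional_def)

lemma restrict_const_iff: "restrict x R = (\<lambda>w\<in>R. k) \<longleftrightarrow> (\<forall>w\<in>R. x w = k)"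
proof
  assume "restrict x R = (\<lambda>w\<in>R. k)"
  then show "\<forall>w\<in>R. x w = k" by (metis restrict_apply')
next
  assume "\<forall>w\<in>R. x w = k"
  then show "restrict x R = (\<lambda>w\<in>R. k)" by (intro ext) (simp add: restrict_def)
qed

lemma SPM_cyl:
  assumes R: "finite R"
  shows "emeasure (SPM r) {\<tau> \<in> space (SPM r). \<forall>w\<in>R. \<tau> w = \<kappa>} = ennreal (pmf (spin_pmf r) \<kappa> ^ card R)"
proof -
  have eq: "{\<tau> \<in> space (SPM r). \<forall>w\<in>R. \<tau> w = \<kappa>}
      = prod_emb UNIV (\<lambda>_. measure_pmf (spin_pmf r)) R (\<Pi>\<^sub>E w\<in>R. {\<kappa>})"
    unfolding prod_emb_def space_SPM by (auto simp: restrict_const_iff PiE_def extensional_def)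
  have "emeasure (SPM r) (prod_emb UNIV (\<lambda>_. measure_pmf (spin_pmf r)) R (\<Pi>\<^sub>E w\<in>R. {\<kappa>}))
      = (\<Prod>w\<in>R. emeasure (measure_pmf (spin_pmf r)) {\<kappa>})"
    unfolding SPM_def by (rule emeasure_PiM_emb) (auto simp: R prob_space_measure_pmf)
  also have "\<dots> = ennreal (pmf (spin_pmf r) \<kappa>) ^ card R" by (simp add: emeasure_pmf_single)
  also have "\<dots> = ennreal (pmf (spin_pmf r) \<kappa> ^ card R)" by (simp add: ennreal_power)
  finally show ?thesis using eq by simp
qed

lemma P_event:
  assumes sets: "sets \<nu> = sets Omega_E" and ps: "prob_space \<nu>"
    and B: "B \<in> sets Omega_E" and W: "finite W"
  shows "measure (P_joint \<nu> r) {\<omega> \<in> space (P_joint \<nu> r). fst \<omega> \<in> B \<and> (\<forall>v\<in>W. snd \<omega> v = \<kappa>)}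
       = integral\<^sup>L \<nu> (\<lambda>\<eta>. indicator B \<eta> * cpow (pmf (spin_pmf r) \<kappa>) W \<eta>)"
proof -
  define c where "c = pmf (spin_pmf r) \<kappa>"
  have c0: "0 \<le> c" unfolding c_def by simp
  interpret SP: prob_space "SPM r" by (rule prob_SPM)
  interpret nu: prob_space \<nu> by (rule ps)
  have spnu: "space \<nu> = space Omega_E" using sets by (rule sets_eq_imp_space_eq)
  let ?T = "\<nu> \<Otimes>\<^sub>M SPM r"
  define X where "X = {\<omega> \<in> space NN. fst \<omega> \<in> B \<and> (\<forall>v\<in>W. snd \<omega> v = \<kappa>)}"
  have Xs: "X \<in> sets NN" unfolding X_def by (rule event_sets[OF B W])
  have fm: "fmap \<in> measurable ?T NN" by (rule fmap_meas[OF sets])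
  have "space (P_joint \<nu> r) = space NN" unfolding P_joint_eq by simp
  then have "{\<omega> \<in> space (P_joint \<nu> r). fst \<omega> \<in> B \<and> (\<forall>v\<in>W. snd \<omega> v = \<kappa>)} = X" unfolding X_def by simp
  then have mP: "measure (P_joint \<nu> r) {\<omega> \<in> space (P_joint \<nu> r). fst \<omega> \<in> B \<and> (\<forall>v\<in>W. snd \<omega> v = \<kappa>)}
      = measure ?T (fmap -` X \<inter> space ?T)"
    unfolding P_joint_eq using measure_distr[OF fm Xs] by simp
  define Y where "Y = fmap -` X \<inter> space ?T"
  have Ys: "Y \<in> sets ?T" unfolding Y_def by (rule measurable_sets[OF fm Xs])
  have Yeq: "Y = {x \<in> space ?T. fst x \<in> B \<and> (\<forall>w\<in>rep (fst x) ` W. snd x w = \<kappa>)}"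
  proof (intro equalityI subsetI)
    fix x assume x: "x \<in> Y"
    then have "fmap x \<in> X" "x \<in> space ?T" unfolding Y_def by auto
    then show "x \<in> {x \<in> space ?T. fst x \<in> B \<and> (\<forall>w\<in>rep (fst x) ` W. snd x w = \<kappa>)}"
      unfolding X_def fmap_def by (cases x) auto
  next
    fix x assume x: "x \<in> {x \<in> space ?T. fst x \<in> B \<and> (\<forall>w\<in>rep (fst x) ` W. snd x w = \<kappa>)}"
    then have xs: "x \<in> space ?T" by simp
    have "fmap x \<in> space NN" using measurable_space[OF fm xs] .
    then show "x \<in> Y" using x unfolding Y_def X_def fmap_def by (cases x) auto
  qed
  have sec: "emeasure (SPM r) (Pair \<eta> -` Y) = ennreal (indicator B \<eta> * cpow c W \<eta>)" if \<eta>: "\<eta> \<in> space \<nu>" for \<eta>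
  proof (cases "\<eta> \<in> B")
    case True
    have "Pair \<eta> -` Y = {\<tau> \<in> space (SPM r). \<forall>w\<in>rep \<eta> ` W. \<tau> w = \<kappa>}"
      unfolding Yeq using \<eta> True by (auto simp: space_pair_measure space_SPM)
    then show ?thesis using True SPM_cyl[of "rep \<eta> ` W" r \<kappa>] W unfolding cpow_def c_def by simp
  next
    case False
    have "Pair \<eta> -` Y = {}" unfolding Yeq using False by auto
    then show ?thesis using False by simp
  qed
  have "emeasure ?T Y = (\<integral>\<^sup>+\<eta>. emeasure (SPM r) (Pair \<eta> -` Y) \<partial>\<nu>)"
    by (rule SP.emeasure_pair_measure_alt[OF Ys])
  also have "\<dots> = (\<integral>\<^sup>+\<eta>. ennreal (indicator B \<eta> * cpow c W \<eta>) \<partial>\<nu>)"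
    by (rule nn_integral_cong) (rule sec)
  finally have em: "emeasure ?T Y = (\<integral>\<^sup>+\<eta>. ennreal (indicator B \<eta> * cpow c W \<eta>) \<partial>\<nu>)" .
  have gm: "(\<lambda>\<eta>. indicator B \<eta> * cpow c W \<eta>) \<in> borel_measurable \<nu>"
  proof -
    have "(\<lambda>\<eta>. indicator B \<eta> * cpow c W \<eta>) \<in> borel_measurable Omega_E"
      using B cpow_borel[OF W] by (intro borel_measurable_times borel_measurable_indicator)
    then show ?thesis by (subst measurable_cong_sets[OF sets refl])
  qed
  have "measure ?T Y = enn2real (\<integral>\<^sup>+\<eta>. ennreal (indicator B \<eta> * cpow c W \<eta>) \<partial>\<nu>)"
    unfolding measure_def em ..
  also have "\<dots> = integral\<^sup>L \<nu> (\<lambda>\<eta>. indicator B \<eta> * cpow c W \<eta>)"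
    by (rule enn2real_nn_integral_eq_integral[OF _ _ gm]) (auto simp: cpow_def c0)
  finally show ?thesis using mP unfolding Y_def c_def by simp
qed

lemma cyl_mono: "F \<subseteq> F' \<Longrightarrow> cyl F G \<Longrightarrow> cyl F' G"
  unfolding cyl_def by blast

lemma cyl_times: "cyl F G1 \<Longrightarrow> cyl F G2 \<Longrightarrow> cyl F (\<lambda>\<eta>. (G1 \<eta> :: real) * G2 \<eta>)"
  unfolding cyl_def by metis

lemma cyl_indicator:
  assumes "\<And>\<eta> \<eta>'. \<eta> \<in> space Omega_E \<Longrightarrow> \<eta>' \<in> space Omega_E \<Longrightarrow> (\<forall>e\<in>F. \<eta> e = \<eta>' e) \<Longrightarrow> Q \<eta> = Q \<eta>'"
  shows "cyl F (indicator {\<eta> \<in> space Omega_E. Q \<eta>} :: _ \<Rightarrow> real)"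
  unfolding cyl_def
proof (intro ballI impI)
  fix \<eta> \<eta>' assume h: "\<eta> \<in> space Omega_E" "\<eta>' \<in> space Omega_E" "\<forall>e\<in>F. \<eta> e = \<eta>' e"
  have "Q \<eta> = Q \<eta>'" using assms[OF h] .
  then show "(indicator {\<eta> \<in> space Omega_E. Q \<eta>} \<eta> :: real) = indicator {\<eta> \<in> space Omega_E. Q \<eta>} \<eta>'"
    using h by (simp add: indicator_def)
qed

lemma cpow_le1: "0 \<le> c \<Longrightarrow> c \<le> 1 \<Longrightarrow> cpow c W \<eta> \<le> 1"
  unfolding cpow_def by (simp add: power_le_one)

lemma cpow_nonneg: "0 \<le> c \<Longrightarrow> 0 \<le> cpow c W \<eta>"
  unfolding cpow_def by simp

lemma cfg_apply: "i \<in> TE \<Longrightarrow> cfg Op i = (i \<in> Op)"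
  unfolding cfg_def by simp

lemma finite_ineq:
  fixes p c :: real
  assumes p: "0 \<le> p" "p \<le> 1" and c: "0 \<le> c" "c \<le> 1"
    and E: "E \<subseteq> TE" and sg: "\<forall>i\<in>E. s i \<longrightarrow> g i" and e: "e \<in> TE"
    and finV: "finite V"
  defines "Bs \<equiv> {\<eta> \<in> space Omega_E. \<forall>i\<in>E. \<eta> i = s i}"
    and "Bg \<equiv> {\<eta> \<in> space Omega_E. \<forall>i\<in>E. \<eta> i = g i}"
    and "BOs \<equiv> {\<eta> \<in> space Omega_E. \<eta> e \<and> (\<forall>i\<in>E. \<eta> i = s i)}"
    and "BOg \<equiv> {\<eta> \<in> space Omega_E. \<eta> e \<and> (\<forall>i\<in>E. \<eta> i = g i)}"
  shows "fkE p 2 n (indicator BOs) * fkE p 2 n (\<lambda>\<eta>. indicator Bg \<eta> * cpow c V (emask m \<eta>))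
       \<le> fkE p 2 n (\<lambda>\<eta>. indicator BOg \<eta> * cpow c V (emask m \<eta>)) * fkE p 2 n (indicator Bs)"
proof -
  let ?S = "box_edges n"
  let ?w = "fk_weight p 2 n"
  define Ps where "Ps A = (\<forall>i\<in>E. cfg A i = s i)" for A
  define Pg where "Pg A = (\<forall>i\<in>E. cfg A i = g i)" for A
  define Ob where "Ob A = (if cfg A e then 1 else 0 :: real)" for A
  define F where "F A = cpow c V (emask m (cfg A))" for A
  have cfgU: "cfg (A \<union> B) i = (cfg A i \<or> cfg B i)" for A B i unfolding cfg_def by auto
  have cfgI: "cfg (A \<inter> B) i = (cfg A i \<and> cfg B i)" for A B i unfolding cfg_def by auto
  have main: "(\<Sum>A\<in>Pow ?S. (if Ps A then ?w A * Ob A else 0)) * (\<Sum>A\<in>Pow ?S. (if Pg A then ?w A * F A else 0))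
       \<le> (\<Sum>A\<in>Pow ?S. (if Pg A then ?w A * Ob A * F A else 0)) * (\<Sum>A\<in>Pow ?S. (if Ps A then ?w A else 0))"
  proof (rule generic_fkg[OF finite_box_edges])
    show "\<And>A. A \<subseteq> ?S \<Longrightarrow> 0 \<le> ?w A" using fk_weight_nonneg p by blast
    show "\<And>A B. A \<subseteq> ?S \<Longrightarrow> B \<subseteq> ?S \<Longrightarrow> ?w A * ?w B \<le> ?w (A \<union> B) * ?w (A \<inter> B)"
      using fk_lattice p by blast
    show "\<And>A. A \<subseteq> ?S \<Longrightarrow> 0 \<le> Ob A" unfolding Ob_def by simp
    show "\<And>A B. A \<subseteq> B \<Longrightarrow> B \<subseteq> ?S \<Longrightarrow> Ob A \<le> Ob B" unfolding Ob_def cfg_def by auto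
    show "\<And>A. A \<subseteq> ?S \<Longrightarrow> 0 \<le> F A" unfolding F_def using c by (simp add: cpow_nonneg)
    show "F A \<le> F B" if "A \<subseteq> B" "B \<subseteq> ?S" for A B
    proof -
      have "\<And>x. emask m (cfg A) x \<Longrightarrow> emask m (cfg B) x"
        using that unfolding emask_def cfg_def by auto
      then have "card (rep (emask m (cfg B)) ` V) \<le> card (rep (emask m (cfg A)) ` V)"
        using finV by (intro card_rep_mono) (auto intro: connected_mono)
      then show ?thesis unfolding F_def cpow_def using c by (intro power_decreasing) auto
    qed
    show "\<And>A B. Pg A \<Longrightarrow> Pg B \<Longrightarrow> Pg (A \<union> B)" unfolding Pg_def cfgU by auto
    show "\<And>A B. Pg A \<Longrightarrow> Pg B \<Longrightarrow> Pg (A \<inter> B)" unfolding Pg_def cfgI by auto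
    show "\<And>A B. Ps A \<Longrightarrow> Pg B \<Longrightarrow> Pg (A \<union> B)" unfolding Ps_def Pg_def cfgU using sg by auto
    show "\<And>A B. Ps A \<Longrightarrow> Pg B \<Longrightarrow> Ps (A \<inter> B)" unfolding Ps_def Pg_def cfgI using sg by auto
  qed
  have e1: "?w A * indicator BOs (cfg A) = (if Ps A then ?w A * Ob A else 0)" for A
    unfolding BOs_def Ps_def Ob_def using cfg_space[of A] by (auto simp: indicator_def)
  have e2: "?w A * (indicator Bg (cfg A) * cpow c V (emask m (cfg A))) = (if Pg A then ?w A * F A else 0)" for A
    unfolding Bg_def Pg_def F_def using cfg_space[of A] by (auto simp: indicator_def)
  have e3: "?w A * (indicator BOg (cfg A) * cpow c V (emask m (cfg A))) = (if Pg A then ?w A * Ob A * F A else 0)" for A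
    unfolding BOg_def Pg_def F_def Ob_def using cfg_space[of A] by (auto simp: indicator_def)
  have e4: "?w A * indicator Bs (cfg A) = (if Ps A then ?w A else 0)" for A
    unfolding Bs_def Ps_def using cfg_space[of A] by (auto simp: indicator_def)
  define Z where "Z = (\<Sum>A\<in>Pow ?S. ?w A)"
  have "fkE p 2 n (indicator BOs) * fkE p 2 n (\<lambda>\<eta>. indicator Bg \<eta> * cpow c V (emask m \<eta>))
      = ((\<Sum>A\<in>Pow ?S. (if Ps A then ?w A * Ob A else 0)) * (\<Sum>A\<in>Pow ?S. (if Pg A then ?w A * F A else 0))) / (Z * Z)"
    unfolding fkE_def e1 e2 Z_def by simp
  also have "\<dots> \<le> ((\<Sum>A\<in>Pow ?S. (if Pg A then ?w A * Ob A * F A else 0)) * (\<Sum>A\<in>Pow ?S. (if Ps A then ?w A else 0))) / (Z * Z)"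
    using main by (intro divide_right_mono) auto
  also have "\<dots> = fkE p 2 n (\<lambda>\<eta>. indicator BOg \<eta> * cpow c V (emask m \<eta>)) * fkE p 2 n (indicator Bs)"
    unfolding fkE_def e3 e4 Z_def by simp
  finally show ?thesis .
qed

lemma ind_cpow_bound: "0 \<le> c \<Longrightarrow> c \<le> 1 \<Longrightarrow> norm (indicator B \<eta> * cpow c W \<eta>') \<le> (1::real)"
  using cpow_le1[of c W \<eta>'] cpow_nonneg[of c W \<eta>'] by (auto simp: indicator_def)

theorem lemma4p1:
  fixes \<beta> r :: real and \<nu> :: "(edg \<Rightarrow> bool) measure" and V :: "vtx set" and \<kappa> :: int
    and E :: "edg set" and s g :: "edg \<Rightarrow> bool" and e :: edg
    and P :: "((edg \<Rightarrow> bool) \<times> (vtx \<Rightarrow> int)) measure"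
    and I As Ag Open :: "((edg \<Rightarrow> bool) \<times> (vtx \<Rightarrow> int)) set"
  assumes "0 \<le> \<beta>" and "\<beta> < beta_c" and "0 \<le> r" and "r \<le> 1"
    and "FK_free_limit (1 - exp (- \<beta>)) 2 \<nu>"
    and "finite V" and "V \<noteq> {}" and "\<kappa> \<in> {-1, 1}"
    and "finite E" and "E \<subseteq> TE" and "\<forall>i\<in>E. s i \<longrightarrow> g i"
    and "e \<in> TE - E"
  defines "P \<equiv> P_joint \<nu> r"
    and "I \<equiv> {\<omega> \<in> space P. \<forall>v\<in>V. snd \<omega> v = \<kappa>}"
    and "As \<equiv> {\<omega> \<in> space P. \<forall>i\<in>E. fst \<omega> i = s i}"
    and "Ag \<equiv> {\<omega> \<in> space P. \<forall>i\<in>E. fst \<omega> i = g i}"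
    and "Open \<equiv> {\<omega> \<in> space P. fst \<omega> e}"
  assumes "measure P (Ag \<inter> I) > 0"
  shows "measure P (Open \<inter> Ag \<inter> I) / measure P (Ag \<inter> I) \<ge> measure P (Open \<inter> As) / measure P As"
proof -
  have beta0: "0 \<le> \<beta>" and finV: "finite V" and finE: "finite E" and ETE: "E \<subseteq> TE"
    and sg: "\<forall>i\<in>E. s i \<longrightarrow> g i" and eTE: "e \<in> TE" using assms(1,6,9,10,11,12) by auto
  define p where "p = 1 - exp (- \<beta>)"
  have p: "0 \<le> p" "p \<le> 1" unfolding p_def using beta0 by auto
  have lim: "FK_free_limit p 2 \<nu>" unfolding p_def by (rule assms(5))
  have ps: "prob_space \<nu>" and sets: "sets \<nu> = sets Omega_E" using lim unfolding FK_free_limit_def by auto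
  interpret nu: prob_space \<nu> by (rule ps)
  have spnu: "space \<nu> = space Omega_E" using sets by (rule sets_eq_imp_space_eq)
  define c where "c = pmf (spin_pmf r) \<kappa>"
  have c: "0 \<le> c" "c \<le> 1" unfolding c_def by (auto simp: pmf_le_1)
  define Bs where "Bs = {\<eta> \<in> space Omega_E. \<forall>i\<in>E. \<eta> i = s i}"
  define Bg where "Bg = {\<eta> \<in> space Omega_E. \<forall>i\<in>E. \<eta> i = g i}"
  define BOs where "BOs = {\<eta> \<in> space Omega_E. \<eta> e \<and> (\<forall>i\<in>E. \<eta> i = s i)}"
  define BOg where "BOg = {\<eta> \<in> space Omega_E. \<eta> e \<and> (\<forall>i\<in>E. \<eta> i = g i)}"
  define F0 where "F0 = insert e E"
  have F0: "finite F0" "F0 \<subseteq> TE" unfolding F0_def using finE ETE eTE by auto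
  have cBs: "cyl F0 (indicator Bs :: _ \<Rightarrow> real)" unfolding Bs_def F0_def by (intro cyl_indicator) auto
  have cBg: "cyl F0 (indicator Bg :: _ \<Rightarrow> real)" unfolding Bg_def F0_def by (intro cyl_indicator) auto
  have cBOs: "cyl F0 (indicator BOs :: _ \<Rightarrow> real)" unfolding BOs_def F0_def by (intro cyl_indicator) auto
  have cBOg: "cyl F0 (indicator BOg :: _ \<Rightarrow> real)" unfolding BOg_def F0_def by (intro cyl_indicator) auto
  have setsB: "Bs \<in> sets Omega_E" "Bg \<in> sets Omega_E" "BOs \<in> sets Omega_E" "BOg \<in> sets Omega_E"
    unfolding Bs_def Bg_def BOs_def BOg_def by (auto intro!: cyl_set_sets[OF F0] simp: F0_def)
  have spP: "space P = space NN" unfolding assms(13) P_joint_eq by simp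
  have fstsp: "\<omega> \<in> space P \<Longrightarrow> fst \<omega> \<in> space Omega_E" for \<omega>
    unfolding spP NN_def by (auto simp: space_pair_measure)
  have ev1: "Open \<inter> Ag \<inter> I = {\<omega> \<in> space P. fst \<omega> \<in> BOg \<and> (\<forall>v\<in>V. snd \<omega> v = \<kappa>)}"
    unfolding assms(14,16,17) BOg_def using fstsp by auto
  have ev2: "Ag \<inter> I = {\<omega> \<in> space P. fst \<omega> \<in> Bg \<and> (\<forall>v\<in>V. snd \<omega> v = \<kappa>)}"
    unfolding assms(14,16) Bg_def using fstsp by auto
  have ev3: "Open \<inter> As = {\<omega> \<in> space P. fst \<omega> \<in> BOs \<and> (\<forall>v\<in>{}. snd \<omega> v = \<kappa>)}"
    unfolding assms(15,17) BOs_def using fstsp by auto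
  have ev4: "As = {\<omega> \<in> space P. fst \<omega> \<in> Bs \<and> (\<forall>v\<in>{}. snd \<omega> v = \<kappa>)}"
    unfolding assms(15) Bs_def using fstsp by auto
  have cpow0: "cpow c {} \<eta> = 1" for \<eta> unfolding cpow_def by simp
  define a where "a = integral\<^sup>L \<nu> (\<lambda>\<eta>. indicator BOg \<eta> * cpow c V \<eta>)"
  define b where "b = integral\<^sup>L \<nu> (\<lambda>\<eta>. indicator Bg \<eta> * cpow c V \<eta>)"
  define x where "x = integral\<^sup>L \<nu> (indicator BOs :: _ \<Rightarrow> real)"
  define y where "y = integral\<^sup>L \<nu> (indicator Bs :: _ \<Rightarrow> real)"
  have ma: "measure P (Open \<inter> Ag \<inter> I) = a"
    unfolding ev1 a_def c_def assms(13) by (rule P_event[OF sets ps setsB(4) finV])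
  have mb: "measure P (Ag \<inter> I) = b"
    unfolding ev2 b_def c_def assms(13) by (rule P_event[OF sets ps setsB(2) finV])
  have mx: "measure P (Open \<inter> As) = x"
    unfolding ev3 x_def assms(13) using P_event[OF sets ps setsB(3) finite.emptyI, of r \<kappa>] by (simp add: cpow0 cpow_def)
  have my: "measure P As = y"
    unfolding ev4 y_def assms(13) using P_event[OF sets ps setsB(1) finite.emptyI, of r \<kappa>] by (simp add: cpow0 cpow_def)
  define am where "am m = integral\<^sup>L \<nu> (\<lambda>\<eta>. indicator BOg \<eta> * cpow c V (emask m \<eta>))" for m
  define bm where "bm m = integral\<^sup>L \<nu> (\<lambda>\<eta>. indicator Bg \<eta> * cpow c V (emask m \<eta>))" for m
  define Vals where "Vals = insert 0 ((\<lambda>j. c ^ j) ` {..card V})"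
  have finVals: "finite Vals" unfolding Vals_def by simp
  have valsP: "indicator B \<eta> * cpow c V (emask m \<eta>) \<in> Vals" for B \<eta> m
    unfolding Vals_def using cpow_vals[OF finV, of c "emask m \<eta>"] by (auto simp: indicator_def)
  have cprod: "cyl (F0 \<union> box_edges m) (\<lambda>\<eta>. indicator B \<eta> * cpow c V (emask m \<eta>))"
    if "cyl F0 (indicator B :: _ \<Rightarrow> real)" for B m
    by (rule cyl_times[OF cyl_mono[OF _ that] cyl_mono[OF _ cpow_mask_cyl]]) auto
  have Fm: "finite (F0 \<union> box_edges m)" "F0 \<union> box_edges m \<subseteq> TE" for m
    using F0 finite_box_edges box_edges_TE by auto
  have step_m: "x * bm m \<le> am m * y" for m
  proof -
    have L1: "(\<lambda>n. fkE p 2 n (indicator BOs)) \<longlonglongrightarrow> x" unfolding x_def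
      by (rule fk_limit_fun[OF lim F0 cBOs, of "{0,1}"]) (auto simp: indicator_def)
    have L4: "(\<lambda>n. fkE p 2 n (indicator Bs)) \<longlonglongrightarrow> y" unfolding y_def
      by (rule fk_limit_fun[OF lim F0 cBs, of "{0,1}"]) (auto simp: indicator_def)
    have L2: "(\<lambda>n. fkE p 2 n (\<lambda>\<eta>. indicator Bg \<eta> * cpow c V (emask m \<eta>))) \<longlonglongrightarrow> bm m" unfolding bm_def
      by (rule fk_limit_fun[OF lim Fm cprod[OF cBg] finVals valsP])
    have L3: "(\<lambda>n. fkE p 2 n (\<lambda>\<eta>. indicator BOg \<eta> * cpow c V (emask m \<eta>))) \<longlonglongrightarrow> am m" unfolding am_def
      by (rule fk_limit_fun[OF lim Fm cprod[OF cBOg] finVals valsP])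
    have ineq: "fkE p 2 n (indicator BOs) * fkE p 2 n (\<lambda>\<eta>. indicator Bg \<eta> * cpow c V (emask m \<eta>))
       \<le> fkE p 2 n (\<lambda>\<eta>. indicator BOg \<eta> * cpow c V (emask m \<eta>)) * fkE p 2 n (indicator Bs)" for n
      unfolding Bs_def Bg_def BOs_def BOg_def by (rule finite_ineq[OF p c ETE sg eTE finV])
    show ?thesis
      by (rule tendsto_le[OF trivial_limit_sequentially tendsto_mult[OF L3 L4] tendsto_mult[OF L1 L2]])
         (simp add: ineq)
  qed
  have meas_nu: "f \<in> borel_measurable Omega_E \<Longrightarrow> f \<in> borel_measurable \<nu>" for f :: "_ \<Rightarrow> real"
    by (subst measurable_cong_sets[OF sets refl])
  have dc: "(\<lambda>m. integral\<^sup>L \<nu> (\<lambda>\<eta>. indicator B \<eta> * cpow c V (emask m \<eta>))) \<longlonglongrightarrow> integral\<^sup>L \<nu> (\<lambda>\<eta>. indicator B \<eta> * cpow c V \<eta>)"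
    if B: "B \<in> sets Omega_E" for B
  proof (rule integral_dominated_convergence[where w="\<lambda>_. 1"])
    show "(\<lambda>\<eta>. indicator B \<eta> * cpow c V \<eta>) \<in> borel_measurable \<nu>"
      using B cpow_borel[OF finV] by (intro meas_nu borel_measurable_times borel_measurable_indicator)
    show "(\<lambda>\<eta>. indicator B \<eta> * cpow c V (emask m \<eta>)) \<in> borel_measurable \<nu>" for m
      using B cpow_mask_borel[OF finV] by (intro meas_nu borel_measurable_times borel_measurable_indicator)
    show "integrable \<nu> (\<lambda>_. 1::real)" by simp
    show "AE \<eta> in \<nu>. (\<lambda>m. indicator B \<eta> * cpow c V (emask m \<eta>)) \<longlonglongrightarrow> indicator B \<eta> * cpow c V \<eta>"
      by (intro AE_I2 tendsto_mult_left cpow_mask_lim[OF finV])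
    show "AE \<eta> in \<nu>. norm (indicator B \<eta> * cpow c V (emask m \<eta>)) \<le> 1" for m
      by (intro AE_I2 ind_cpow_bound c)
  qed
  have La: "am \<longlonglongrightarrow> a" unfolding am_def a_def by (rule dc[OF setsB(4)])
  have Lb: "bm \<longlonglongrightarrow> b" unfolding bm_def b_def by (rule dc[OF setsB(2)])
  have key: "x * b \<le> a * y"
    by (rule tendsto_le[OF trivial_limit_sequentially tendsto_mult[OF La tendsto_const] tendsto_mult[OF tendsto_const Lb]])
       (simp add: step_m)
  have bpos: "b > 0" using assms(18) mb by simp
  have a0: "0 \<le> a" unfolding a_def using c by (intro integral_nonneg_AE AE_I2) (simp add: cpow_nonneg)
  have y0: "0 \<le> y" unfolding y_def by (intro integral_nonneg_AE AE_I2) simp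
  have "x / y \<le> a / b"
  proof (cases "y = 0")
    case True
    then show ?thesis using a0 bpos by simp
  next
    case False
    then have "y > 0" using y0 by simp
    then show ?thesis using key bpos by (simp add: field_simps)
  qed
  then show ?thesis using ma mb mx my by simp
qed

end
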